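(* Let $\mathcal{H}$ be a real Hilbert space, let $A:\mathcal{H}\rightrightarrows\mathcal{H}$ be maximal monotone with $A^{-1}(0)\neq\emptyset$, let $\theta>0$, let $p\geq1$ be an integer, and let $x_0\in\Omega:=\{x\in\mathcal{H}:0\notin Ax\}$. Then the closed-loop control system \[ \dot{x}(t)+x(t)-(I+\lambda(t)A)^{-1}x(t)=0,\qquad \lambda(t)\,\|(I+\lambda(t)A)^{-1}x(t)-x(t)\|^{p-1}=\theta,\qquad x(0)=x_0, \] has a unique global solution $(x,\lambda):[0,+\infty)\to\mathcal{H}\times(0,+\infty)$, with $x(\cdot)$ continuously differentiable and $\lambda(\cdot)$ locally Lipschitz continuous. If $p\geq 2$, then \[ \|x(t)-(I+\lambda(t)A)^{-1}x(t)\|\geq \|x(0)-(I+\lambda(0)A)^{-1}x(0)\|\,e^{-t}\quad\text{for all } t\geq 0. \]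
   Context: $(I+\lambda A)^{-1}$ denotes the resolvent of the maximal monotone operator $A$ with index $\lambda>0$; $A^{-1}(0)=\{x\in\mathcal{H}:0\in Ax\}$. *)

theory Defs
  imports "HOL-Analysis.Analysis"
begin

definition monotone_op :: "('a::real_inner \<Rightarrow> 'a set) \<Rightarrow> bool" where
  "monotone_op A \<longleftrightarrow>
     (\<forall>x y u v. u \<in> A x \<longrightarrow> v \<in> A y \<longrightarrow> inner (x - y) (u - v) \<ge> 0)"

definition maximal_monotone :: "('a::real_inner \<Rightarrow> 'a set) \<Rightarrow> bool" where
  "maximal_monotone A \<longleftrightarrow> monotone_op A \<and>
     (\<forall>x u. (\<forall>y v. v \<in> A y \<longrightarrow> inner (x - y) (u - v) \<ge> 0) \<longrightarrow> u \<in> A x)"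

text \<open>Resolvent (I + lam A)^{-1} x: the unique y with x \<in> y + lam A y.\<close>
definition resolvent :: "('a::real_inner \<Rightarrow> 'a set) \<Rightarrow> real \<Rightarrow> 'a \<Rightarrow> 'a" where
  "resolvent A lam x = (THE y. (1 / lam) *\<^sub>R (x - y) \<in> A y)"

definition locally_lipschitz_on :: "real set \<Rightarrow> (real \<Rightarrow> real) \<Rightarrow> bool" where
  "locally_lipschitz_on S f \<longleftrightarrow>
     (\<forall>t\<in>S. \<exists>e>0. \<exists>L. L-lipschitz_on (cball t e \<inter> S) f)"

definition is_cl_solution ::
  "('a::real_inner \<Rightarrow> 'a set) \<Rightarrow> real \<Rightarrow> nat \<Rightarrow> 'a \<Rightarrow> (real \<Rightarrow> 'a) \<Rightarrow> (real \<Rightarrow> real) \<Rightarrow> bool" where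
  "is_cl_solution A \<theta> p x0 x lam \<longleftrightarrow>
     (\<exists>x'. (\<forall>t\<ge>0. (x has_vector_derivative x' t) (at t within {0..})) \<and>
           continuous_on {0..} x' \<and>
           (\<forall>t\<ge>0. x' t + x t - resolvent A (lam t) (x t) = 0)) \<and>
     (\<forall>t\<ge>0. lam t > 0) \<and>
     locally_lipschitz_on {0..} lam \<and>
     (\<forall>t\<ge>0. lam t * norm (resolvent A (lam t) (x t) - x t) ^ (p - 1) = \<theta>) \<and>
     x 0 = x0"

end

theory Submission
  imports Defs "HOL-Analysis.Analysis"
begin

typedef 'a hw = "UNIV :: ('a::{real_normed_vector,complete_space}) set" by auto

setup_lifting type_definition_hw

instantiation hw :: ("{real_normed_vector,complete_space}") real_normed_vector
begin
lift_definition zero_hw :: "'a hw" is 0 .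
lift_definition plus_hw :: "'a hw \<Rightarrow> 'a hw \<Rightarrow> 'a hw" is "(+)" .
lift_definition minus_hw :: "'a hw \<Rightarrow> 'a hw \<Rightarrow> 'a hw" is "(-)" .
lift_definition uminus_hw :: "'a hw \<Rightarrow> 'a hw" is uminus .
lift_definition scaleR_hw :: "real \<Rightarrow> 'a hw \<Rightarrow> 'a hw" is scaleR .
lift_definition norm_hw :: "'a hw \<Rightarrow> real" is norm .
lift_definition sgn_hw :: "'a hw \<Rightarrow> 'a hw" is sgn .
lift_definition dist_hw :: "'a hw \<Rightarrow> 'a hw \<Rightarrow> real" is dist .
definition uniformity_hw :: "('a hw \<times> 'a hw) filter" where
  "uniformity_hw = (INF e\<in>{0 <..}. principal {(x, y). dist x y < e})"
definition open_hw :: "'a hw set \<Rightarrow> bool" where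
  "open_hw U = (\<forall>x\<in>U. eventually (\<lambda>(x', y). x' = x \<longrightarrow> y \<in> U) uniformity)"
instance
proof
  fix a b c :: "'a hw" and r s :: real
  show "a + b + c = a + (b + c)" by transfer (simp add: add.assoc)
  show "a + b = b + a" by transfer (simp add: add.commute)
  show "0 + a = a" by transfer simp
  show "- a + a = 0" by transfer simp
  show "a - b = a + - b" by transfer simp
  show "r *\<^sub>R (a + b) = r *\<^sub>R a + r *\<^sub>R b" by transfer (simp add: scaleR_add_right)
  show "(r + s) *\<^sub>R a = r *\<^sub>R a + s *\<^sub>R a" by transfer (simp add: scaleR_add_left)
  show "r *\<^sub>R s *\<^sub>R a = (r * s) *\<^sub>R a" by transfer simp
  show "1 *\<^sub>R a = a" by transfer simp
  show "sgn a = inverse (norm a) *\<^sub>R a" by transfer (simp add: sgn_div_norm)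
  show "dist a b = norm (a - b)" by transfer (simp add: dist_norm)
  show "norm a = 0 \<longleftrightarrow> a = 0" by transfer simp
  show "norm (a + b) \<le> norm a + norm b" by transfer (rule norm_triangle_ineq)
  show "norm (r *\<^sub>R a) = \<bar>r\<bar> * norm a" by transfer simp
qed (simp_all add: uniformity_hw_def open_hw_def)
end

instance hw :: ("{real_normed_vector,complete_space}") banach
proof
  fix X :: "nat \<Rightarrow> 'a hw"
  assume "Cauchy X"
  hence "Cauchy (\<lambda>n. Rep_hw (X n))"
    unfolding Cauchy_def by (simp add: dist_hw.rep_eq)
  then obtain L where L: "(\<lambda>n. Rep_hw (X n)) \<longlonglongrightarrow> L"
    using Cauchy_convergent convergent_def by blast
  have "X \<longlonglongrightarrow> Abs_hw L"
    using L unfolding lim_sequentially by (simp add: dist_hw.rep_eq Abs_hw_inverse)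
  thus "convergent X" by (auto simp: convergent_def)
qed

lemma bounded_linear_Rep_hw: "bounded_linear Rep_hw"
  by (rule bounded_linear_intro[where K=1]) (simp_all add: plus_hw.rep_eq scaleR_hw.rep_eq norm_hw.rep_eq)

lemma bounded_linear_Abs_hw: "bounded_linear (Abs_hw :: 'a::{real_normed_vector,complete_space} \<Rightarrow> 'a hw)"
  by (rule bounded_linear_intro[where K=1])
     (simp_all add: plus_hw.abs_eq scaleR_hw.abs_eq norm_hw.abs_eq eq_onp_def)

primrec pic :: "('b::banach \<Rightarrow> 'b) \<Rightarrow> 'b \<Rightarrow> nat \<Rightarrow> real \<Rightarrow> 'b" where
  "pic G x0 0 = (\<lambda>t. x0)"
| "pic G x0 (Suc n) = (\<lambda>t. x0 + integral {0..t} (\<lambda>s. G (pic G x0 n s)))"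

lemma poly_has_integral:
  assumes "0 \<le> t"
  shows "((\<lambda>s. c * s^k) has_integral c * t^(Suc k) / real (Suc k)) {0..t}"
proof -
  have "((\<lambda>s. c * s^k) has_integral ((\<lambda>s. c * s^(Suc k)/real (Suc k)) t - (\<lambda>s. c * s^(Suc k)/real (Suc k)) 0)) {0..t}"
  proof (rule fundamental_theorem_of_calculus[OF assms])
    fix s :: real assume "s \<in> {0..t}"
    have "((\<lambda>s. c * s^(Suc k)/real (Suc k)) has_field_derivative c * s^k) (at s within {0..t})"
      using DERIV_cdivide[OF DERIV_cmult[OF DERIV_pow[of "Suc k" s "{0..t}"]], of c "real (Suc k)"]
      by (simp del: of_nat_Suc)
    thus "((\<lambda>s. c * s^(Suc k)/real (Suc k)) has_vector_derivative c * s^k) (at s within {0..t})"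
      using has_real_derivative_iff_has_vector_derivative by blast
  qed
  thus ?thesis by simp
qed

lemma picard_banach:
  fixes G :: "'b::banach \<Rightarrow> 'b"
  assumes lip: "\<And>x y. norm (G x - G y) \<le> L * norm (x - y)" and L: "L > 0"
  shows "\<exists>x. x 0 = x0 \<and> (\<forall>t\<ge>0. (x has_vector_derivative G (x t)) (at t within {0..}))"
proof -
  have Gc: "continuous_on S G" for S
    by (rule lipschitz_on_continuous_on[where L=L], rule lipschitz_onI) (use lip L in \<open>auto simp: dist_norm\<close>)
  define P where "P = pic G x0"
  have Pc: "continuous_on {0..b} (P n)" for n b
  proof (induction n)
    case 0 thus ?case by (simp add: P_def)
  next
    case (Suc n)
    have "continuous_on {0..b} (\<lambda>s. G (P n s))"
      using continuous_on_compose2[OF Gc Suc] by auto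
    hence "continuous_on {0..b} (\<lambda>t. integral {0..t} (\<lambda>s. G (P n s)))"
      by (intro indefinite_integral_continuous_1 integrable_continuous_real)
    thus ?case by (simp add: P_def continuous_on_add)
  qed
  have GPc: "continuous_on {0..b} (\<lambda>s. G (P n s))" for n b
    using continuous_on_compose2[OF Gc Pc] by auto
  have GPi: "(\<lambda>s. G (P n s)) integrable_on {0..b}" for n b
    by (intro integrable_continuous_real GPc)
  define C where "C = norm (G x0)"
  define b where "b T k = C * L^k * T^(Suc k) / fact (Suc k)" for T :: real and k :: nat
  have bound: "norm (P (Suc n) t - P n t) \<le> b t n" if "t \<ge> 0" for n t
    using that
  proof (induction n arbitrary: t)
    case 0
    thus ?case by (simp add: P_def b_def C_def)
  next
    case (Suc n)
    have "P (Suc (Suc n)) t - P (Suc n) t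
        = integral {0..t} (\<lambda>s. G (P (Suc n) s)) - integral {0..t} (\<lambda>s. G (P n s))"
      by (simp add: P_def)
    also have "\<dots> = integral {0..t} (\<lambda>s. G (P (Suc n) s) - G (P n s))"
      by (rule integral_diff[OF GPi GPi, symmetric])
    also have "norm \<dots> \<le> integral {0..t} (\<lambda>s. (L * C * L^n / fact (Suc n)) * s^(Suc n))"
    proof (rule integral_norm_bound_integral)
      show "(\<lambda>s. G (P (Suc n) s) - G (P n s)) integrable_on {0..t}"
        by (intro integrable_diff GPi)
      show "(\<lambda>s. (L * C * L^n / fact (Suc n)) * s^(Suc n)) integrable_on {0..t}"
        using poly_has_integral[OF Suc.prems] by blast
      fix s assume s: "s \<in> {0..t}"
      have "norm (G (P (Suc n) s) - G (P n s)) \<le> L * norm (P (Suc n) s - P n s)" by (rule lip)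
      also have "\<dots> \<le> L * b s n" using Suc.IH[of s] s L by (auto intro: mult_left_mono)
      finally show "norm (G (P (Suc n) s) - G (P n s)) \<le> (L * C * L^n / fact (Suc n)) * s^(Suc n)"
        by (simp add: b_def field_simps)
    qed
    also have "\<dots> = (L * C * L^n / fact (Suc n)) * t^(Suc (Suc n)) / real (Suc (Suc n))"
      using poly_has_integral[OF Suc.prems] by (rule integral_unique)
    also have "\<dots> = b t (Suc n)"
      by (simp add: b_def field_simps del: of_nat_Suc)
    finally show ?case .
  qed
  have bmono: "b t k \<le> b T k" if "0 \<le> t" "t \<le> T" for t T k
    unfolding b_def using that L
    by (intro divide_right_mono mult_left_mono power_mono) (auto simp: C_def)
  have bsum: "summable (b T)" for T
  proof -
    have "summable (\<lambda>k. inverse (fact k) * (L*T)^k)" by (rule summable_exp)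
    hence "summable (\<lambda>k. inverse (fact (Suc k)) * (L*T)^(Suc k))" by (subst summable_Suc_iff)
    hence "summable (\<lambda>k. (C/L) * (inverse (fact (Suc k)) * (L*T)^(Suc k)))" by (rule summable_mult)
    moreover have "(C/L) * (inverse (fact (Suc k)) * (L*T)^(Suc k)) = b T k" for k
      using L unfolding b_def power_mult_distrib by (simp add: field_simps del: fact_Suc)
    ultimately show ?thesis by simp
  qed
  define D where "D k t = P (Suc k) t - P k t" for k t
  have Dsum: "summable (\<lambda>k. D k t)" if "t \<ge> 0" for t
    by (rule summable_comparison_test'[OF bsum[of t]]) (use bound that in \<open>auto simp: D_def\<close>)
  define x where "x t = x0 + (\<Sum>k. D k t)" for t
  define eps where "eps T n = (\<Sum>k. b T (k + n))" for T n
  have eps0: "eps T \<longlonglongrightarrow> 0" for T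
    unfolding eps_def by (rule suminf_exist_split2[OF bsum])
  have Psum: "P n t = x0 + (\<Sum>k<n. D k t)" for n t
    unfolding D_def using sum_lessThan_telescope[of "\<lambda>k. P k t" n] by (simp add: P_def)
  have tail: "norm (x t - P n t) \<le> eps T n" if "0 \<le> t" "t \<le> T" for t T n
  proof -
    have "x t - P n t = (\<Sum>k. D (k + n) t)"
      using suminf_split_initial_segment[OF Dsum[OF that(1)], of n] unfolding x_def Psum by simp
    also have "norm \<dots> \<le> (\<Sum>k. norm (D (k + n) t))"
    proof (rule summable_norm)
      show "summable (\<lambda>k. norm (D (k + n) t))"
        by (rule summable_comparison_test'[OF summable_ignore_initial_segment[OF bsum[of t], of n]])
           (use bound that in \<open>auto simp: D_def\<close>)
    qed
    also have "\<dots> \<le> eps T n"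
      unfolding eps_def
    proof (rule suminf_le)
      show "summable (\<lambda>k. norm (D (k + n) t))"
        by (rule summable_comparison_test'[OF summable_ignore_initial_segment[OF bsum[of t], of n]])
           (use bound that in \<open>auto simp: D_def\<close>)
      show "summable (\<lambda>k. b T (k + n))" by (rule summable_ignore_initial_segment[OF bsum])
      fix k show "norm (D (k + n) t) \<le> b T (k + n)"
        using bound[OF that(1), of "k+n"] bmono[OF that, of "k+n"] by (simp add: D_def)
    qed
    finally show ?thesis .
  qed
  have xc: "continuous_on {0..T} x" for T
  proof (rule uniform_limit_theorem[where f=P and F=sequentially])
    show "\<forall>\<^sub>F n in sequentially. continuous_on {0..T} (P n)" by (simp add: Pc)
    show "uniform_limit {0..T} P x sequentially"
    proof (rule uniform_limitI)
      fix e :: real assume e: "0 < e"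
      from eps0[of T] e have "\<forall>\<^sub>F n in sequentially. eps T n < e"
        by (rule order_tendstoD)
      thus "\<forall>\<^sub>F n in sequentially. \<forall>t\<in>{0..T}. dist (P n t) (x t) < e"
      proof eventually_elim
        case (elim n)
        show ?case
        proof
          fix t assume "t \<in> {0..T}"
          hence "norm (x t - P n t) \<le> eps T n" using tail by auto
          thus "dist (P n t) (x t) < e" using elim by (simp add: dist_norm norm_minus_commute)
        qed
      qed
    qed
  qed simp
  have Gxc: "continuous_on {0..T} (\<lambda>s. G (x s))" for T
    using continuous_on_compose2[OF Gc xc] by auto
  have inteq: "x t = x0 + integral {0..t} (\<lambda>s. G (x s))" if t: "0 \<le> t" for t
  proof -
    let ?I = "integral {0..t} (\<lambda>s. G (x s))"
    have le: "norm (x t - (x0 + ?I)) \<le> eps t (Suc n) + t * (L * eps t n)" for n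
    proof -
      have "norm (integral {0..t} (\<lambda>s. G (P n s)) - ?I)
          = norm (integral {0..t} (\<lambda>s. G (P n s) - G (x s)))"
        using integral_diff[OF GPi integrable_continuous_real[OF Gxc]] by simp
      also have "\<dots> \<le> integral {0..t} (\<lambda>s. L * eps t n)"
      proof (rule integral_norm_bound_integral)
        show "(\<lambda>s. G (P n s) - G (x s)) integrable_on {0..t}"
          by (intro integrable_diff GPi integrable_continuous_real[OF Gxc])
        show "(\<lambda>s. L * eps t n) integrable_on {0..t}" by (rule integrable_const_ivl)
        fix s assume s: "s \<in> {0..t}"
        have "norm (G (P n s) - G (x s)) \<le> L * norm (P n s - x s)" by (rule lip)
        also have "\<dots> \<le> L * eps t n"
          using tail[of s t n] s L by (auto simp: norm_minus_commute intro: mult_left_mono)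
        finally show "norm (G (P n s) - G (x s)) \<le> L * eps t n" .
      qed
      also have "\<dots> = t * (L * eps t n)" using t by simp
      finally have 1: "norm (integral {0..t} (\<lambda>s. G (P n s)) - ?I) \<le> t * (L * eps t n)" .
      have 2: "norm (x t - P (Suc n) t) \<le> eps t (Suc n)" using tail[OF t order.refl] .
      have "x t - (x0 + ?I) = (x t - P (Suc n) t) + (integral {0..t} (\<lambda>s. G (P n s)) - ?I)"
        by (simp add: P_def)
      also have "norm \<dots> \<le> norm (x t - P (Suc n) t) + norm (integral {0..t} (\<lambda>s. G (P n s)) - ?I)"
        by (rule norm_triangle_ineq)
      finally show ?thesis using 1 2 by linarith
    qed
    have "(\<lambda>n. eps t (Suc n) + t * (L * eps t n)) \<longlonglongrightarrow> 0 + t * (L * 0)"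
      by (intro tendsto_intros eps0 filterlim_compose[OF eps0 filterlim_Suc])
    hence "norm (x t - (x0 + ?I)) \<le> 0"
      by (intro LIMSEQ_le_const[where X="\<lambda>n. eps t (Suc n) + t * (L * eps t n)"]) (use le in auto)
    thus ?thesis by simp
  qed
  have "x 0 = x0" using inteq[of 0] by simp
  moreover have "(x has_vector_derivative G (x t)) (at t within {0..})" if t: "t \<ge> 0" for t
  proof -
    have "((\<lambda>u. integral {0..u} (\<lambda>s. G (x s))) has_vector_derivative G (x t)) (at t within {0..t+1})"
      by (rule integral_has_vector_derivative[OF Gxc]) (use t in auto)
    hence "((\<lambda>u. x0 + integral {0..u} (\<lambda>s. G (x s))) has_vector_derivative G (x t)) (at t within {0..t+1})"
      using has_vector_derivative_add[OF has_vector_derivative_const[of x0]] by fastforce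
    hence "(x has_vector_derivative G (x t)) (at t within {0..t+1})"
      by (rule has_vector_derivative_transform[rotated 2]) (use t inteq in auto)
    moreover have "at t within {0..t+1} = at t within {0..}"
      by (rule at_within_nhd[where S="{t - 1 <..< t + 1}"]) auto
    ultimately show ?thesis by simp
  qed
  ultimately show ?thesis by blast
qed

lemma picard:
  fixes G :: "'a::{real_normed_vector,complete_space} \<Rightarrow> 'a"
  assumes lip: "\<And>x y. norm (G x - G y) \<le> L * norm (x - y)" and L: "L > 0"
  shows "\<exists>x. x 0 = x0 \<and> (\<forall>t\<ge>0. (x has_vector_derivative G (x t)) (at t within {0..}))"
proof -
  define G' where "G' = (\<lambda>a. Abs_hw (G (Rep_hw a)))"
  have lip': "norm (G' a - G' b) \<le> L * norm (a - b)" for a b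
    using lip[of "Rep_hw a" "Rep_hw b"]
    by (simp add: G'_def norm_hw.rep_eq minus_hw.rep_eq Abs_hw_inverse)
  obtain y where y0: "y 0 = Abs_hw x0"
    and yd: "\<forall>t\<ge>0. (y has_vector_derivative G' (y t)) (at t within {0..})"
    using picard_banach[OF lip' L] by blast
  define x where "x t = Rep_hw (y t)" for t
  have "x 0 = x0" by (simp add: x_def y0 Abs_hw_inverse)
  moreover have "(x has_vector_derivative G (x t)) (at t within {0..})" if "t \<ge> 0" for t
    using bounded_linear.has_vector_derivative[OF bounded_linear_Rep_hw yd[rule_format, OF that]]
    by (simp add: x_def[abs_def] G'_def Abs_hw_inverse)
  ultimately show ?thesis by blast
qed

lemma minty_core:
  fixes B :: "'a::{real_inner,complete_space} \<Rightarrow> 'a set"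
  assumes mono: "\<And>x y u v. u \<in> B x \<Longrightarrow> v \<in> B y \<Longrightarrow> 0 \<le> inner (x - y) (u - v)"
    and maxi: "\<And>x u. (\<And>y v. v \<in> B y \<Longrightarrow> 0 \<le> inner (x - y) (u - v)) \<Longrightarrow> u \<in> B x"
    and ne: "v0 \<in> B y0"
  shows "\<exists>z. - z \<in> B z"
proof -
  define Gr where "Gr = {p. snd p \<in> B (fst p)}"
  define L :: "'a\<times>'a \<Rightarrow> 'a\<times>'a \<Rightarrow> real"
    where "L p w = inner w (snd p, fst p) - inner (fst p) (snd p)" for p w
  define bdd where "bdd w \<longleftrightarrow> bdd_above ((\<lambda>p. L p w) ` Gr)" for w
  define F where "F w = Sup ((\<lambda>p. L p w) ` Gr)" for w
  define q where "q w = inner (fst w) (snd w)" for w :: "'a \<times> 'a"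
  have Gne: "Gr \<noteq> {}" using ne by (auto simp: Gr_def)
  have Fup: "L p w \<le> F w" if "bdd w" "p \<in> Gr" for p w
    unfolding F_def using cSUP_upper[OF that(2) that(1)[unfolded bdd_def]] .
  have Fle: "bdd w \<and> F w \<le> K" if "\<And>p. p \<in> Gr \<Longrightarrow> L p w \<le> K" for w K
  proof
    show "bdd w" unfolding bdd_def by (rule bdd_aboveI2[where M=K]) (rule that)
    show "F w \<le> K" unfolding F_def by (rule cSUP_least[OF Gne]) (rule that)
  qed
  have key: "inner (fst w - fst p) (snd w - snd p) = q w - L p w" for w p
  proof -
    obtain a b c d where w: "w = (a,b)" and p: "p = (c,d)" by (cases w, cases p)
    have "inner c b = inner b c" by (rule inner_commute)
    thus ?thesis by (simp add: w p L_def q_def inner_diff_left inner_diff_right)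
  qed
  have F1: "q w \<le> F w" if bw: "bdd w" for w
  proof (rule ccontr)
    assume "\<not> q w \<le> F w"
    hence lt: "F w < q w" by simp
    have "snd w \<in> B (fst w)"
    proof (rule maxi)
      fix y v assume "v \<in> B y"
      hence "(y, v) \<in> Gr" by (simp add: Gr_def)
      hence "L (y,v) w < q w" using Fup[OF bw] lt by fastforce
      thus "0 \<le> inner (fst w - y) (snd w - v)" using key[of w "(y,v)"] by simp
    qed
    hence "w \<in> Gr" by (simp add: Gr_def)
    hence "L w w \<le> F w" using Fup[OF bw] by blast
    moreover have "L w w = q w" using key[of w w] by simp
    ultimately show False using lt by simp
  qed
  have F2: "bdd p \<and> F p = q p" if "p \<in> Gr" for p
  proof -
    have "bdd p \<and> F p \<le> q p"
    proof (rule Fle)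
      fix p' assume "p' \<in> Gr"
      hence "0 \<le> inner (fst p - fst p') (snd p - snd p')"
        using that by (intro mono) (auto simp: Gr_def)
      thus "L p' p \<le> q p" using key[of p p'] by simp
    qed
    thus ?thesis using F1 by fastforce
  qed
  define g where "g w = inner w w / 2" for w :: "'a \<times> 'a"
  define h where "h w = F w + g w" for w
  define Dm where "Dm = {w. bdd w}"
  have qg: "q w + g w = inner (fst w + snd w) (fst w + snd w) / 2" for w
  proof -
    obtain a b where w: "w = (a,b)" by (cases w)
    have "inner b a = inner a b" by (rule inner_commute)
    thus ?thesis by (simp add: w q_def g_def inner_add_left inner_add_right field_simps)
  qed
  have hge: "0 \<le> h w" if "w \<in> Dm" for w
  proof -
    have i: "0 \<le> inner (fst w + snd w) (fst w + snd w)" by (rule inner_ge_zero)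
    have "q w \<le> F w" using F1[of w] that by (simp add: Dm_def)
    thus ?thesis unfolding h_def using qg[of w] i by linarith
  qed
  have Dne: "Dm \<noteq> {}" using F2 Gne by (auto simp: Dm_def)
  define m where "m = Inf (h ` Dm)"
  have hbdd: "bdd_below (h ` Dm)" by (rule bdd_belowI2[where m=0]) (rule hge)
  have mle: "m \<le> h w" if "w \<in> Dm" for w
    unfolding m_def by (rule cINF_lower[OF hbdd that])
  have ex: "\<exists>w. w \<in> Dm \<and> h w < m + 1 / real (Suc n)" for n
  proof -
    have "Inf (h ` Dm) < m + 1 / real (Suc n)" by (simp add: m_def)
    thus ?thesis using cInf_lessD[of "h ` Dm"] Dne by blast
  qed
  obtain W where W: "\<forall>n. W n \<in> Dm \<and> h (W n) < m + 1 / real (Suc n)"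
  proof -
    have "\<forall>n. \<exists>w. w \<in> Dm \<and> h w < m + 1 / real (Suc n)" using ex by blast
    from choice[OF this] show ?thesis using that by blast
  qed
  hence WD: "\<And>n. W n \<in> Dm" and Wh: "\<And>n. h (W n) < m + 1 / real (Suc n)" by auto
  have Lpath: "L p (a + s *\<^sub>R (c - a)) = L p a + s * (L p c - L p a)" for p a c s
    by (simp add: L_def inner_add_left inner_diff_left algebra_simps)
  have conv: "bdd (a + s *\<^sub>R (c - a)) \<and> F (a + s *\<^sub>R (c - a)) \<le> F a + s * (F c - F a)"
    if ba: "bdd a" and bc: "bdd c" and s: "0 \<le> s" "s \<le> 1" for a c s
  proof (rule Fle)
    fix p assume p: "p \<in> Gr"
    have 1: "L p a \<le> F a" "L p c \<le> F c" using Fup ba bc p by auto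
    have "L p a + s * (L p c - L p a) = (1 - s) * L p a + s * L p c" by algebra
    also have "\<dots> \<le> (1 - s) * F a + s * F c"
      using 1 s by (intro add_mono mult_left_mono) auto
    also have "\<dots> = F a + s * (F c - F a)" by algebra
    finally show "L p (a + s *\<^sub>R (c - a)) \<le> F a + s * (F c - F a)" by (simp add: Lpath)
  qed
  have gexp: "g (a + s *\<^sub>R d) = g a + s * inner a d + s^2 * g d" for a d s
  proof -
    have "inner d a = inner a d" by (rule inner_commute)
    thus ?thesis by (simp add: g_def inner_add_left inner_add_right power2_eq_square field_simps)
  qed
  have mid: "m \<le> (h a + h c) / 2 - g (c - a) / 4" if "a \<in> Dm" "c \<in> Dm" for a c
  proof -
    have ba: "bdd a" and bc: "bdd c" using that by (auto simp: Dm_def)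
    from conv[OF ba bc, of "1/2"] have cv: "bdd (a + (1/2) *\<^sub>R (c - a))"
      and Fm: "F (a + (1/2) *\<^sub>R (c - a)) \<le> F a + (1/2) * (F c - F a)" by auto
    have "m \<le> h (a + (1/2) *\<^sub>R (c - a))" using mle cv by (simp add: Dm_def)
    also have "\<dots> \<le> F a + (1/2) * (F c - F a) + (g a + (1/2) * inner a (c - a) + (1/2)^2 * g (c - a))"
      unfolding h_def gexp using Fm by simp
    also have "g c = g a + inner a (c - a) + g (c - a)"
      using gexp[of a 1 "c - a"] by simp
    hence "F a + (1/2) * (F c - F a) + (g a + (1/2) * inner a (c - a) + (1/2)^2 * g (c - a))
        = (h a + h c) / 2 - g (c - a) / 4"
      by (simp add: h_def field_simps power2_eq_square)
    finally show ?thesis .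
  qed
  have gnorm: "g d = (norm d)^2 / 2" for d by (simp add: g_def power2_norm_eq_inner)
  have lin8: "\<And>a b n2 c. m \<le> (a + b) / 2 - n2 / 2 / 4 \<Longrightarrow> a < m + c \<Longrightarrow> b < m + c \<Longrightarrow> n2 < 8 * c"
    by (simp add: field_simps)
  have "Cauchy W"
  proof (rule CauchyI)
    fix e :: real assume e: "0 < e"
    obtain N0 :: nat where N0: "8 / e^2 < real N0"
      using reals_Archimedean2 by blast
    define N where "N = N0"
    have N: "8 / e^2 < real (Suc N)" using N0 by (simp add: N_def)
    have "8 * (1 / real (Suc N)) < e^2" using N e by (simp add: field_simps)
    show "\<exists>M. \<forall>i\<ge>M. \<forall>j\<ge>M. norm (W i - W j) < e"
    proof (intro exI allI impI)
      fix i j assume ij: "N \<le> i" "N \<le> j"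
      have hi: "h (W i) < m + 1 / real (Suc N)"
      proof -
        have "1 / real (Suc i) \<le> 1 / real (Suc N)" using ij by (intro divide_left_mono) auto
        thus ?thesis using Wh[of i] by linarith
      qed
      have hj: "h (W j) < m + 1 / real (Suc N)"
      proof -
        have "1 / real (Suc j) \<le> 1 / real (Suc N)" using ij by (intro divide_left_mono) auto
        thus ?thesis using Wh[of j] by linarith
      qed
      have "m \<le> (h (W i) + h (W j)) / 2 - g (W j - W i) / 4" by (rule mid[OF WD WD])
      hence "(norm (W j - W i))^2 < 8 * (1 / real (Suc N))" using hi hj unfolding gnorm
        by (rule lin8)
      also have "\<dots> < e^2" by fact
      finally have "norm (W j - W i) < e" using e by (simp add: power_less_imp_less_base)
      thus "norm (W i - W j) < e" by (simp add: norm_minus_commute)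
    qed
  qed
  then obtain wb where Wlim: "W \<longlonglongrightarrow> wb" using Cauchy_convergent convergent_def by blast
  have "bdd wb \<and> F wb \<le> m - g wb"
  proof (rule Fle)
    fix p assume p: "p \<in> Gr"
    have le: "L p (W n) \<le> m + inverse (real (Suc n)) - g (W n)" for n
      using Fup[OF _ p, of "W n"] WD[of n] Wh[of n] by (simp add: Dm_def h_def divide_inverse)
    have "(\<lambda>n. L p (W n)) \<longlonglongrightarrow> L p wb"
      unfolding L_def by (intro tendsto_intros Wlim)
    moreover have "(\<lambda>n. m + inverse (real (Suc n)) - g (W n)) \<longlonglongrightarrow> m + 0 - g wb"
      unfolding g_def by (intro tendsto_intros Wlim LIMSEQ_inverse_real_of_nat) auto
    ultimately show "L p wb \<le> m - g wb"
      using le by (intro LIMSEQ_le) auto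
  qed
  hence bwb: "bdd wb" and hwb: "h wb \<le> m" by (auto simp: h_def)
  have opt: "h wb \<le> h w" if "w \<in> Dm" for w using mle[OF that] hwb by simp
  obtain xb ub where wbe: "wb = (xb, ub)" by (cases wb)
  have ineq: "inner (xb + ub) (xb + ub) \<le> inner ((- ub) - y) ((- xb) - v)" if yv: "v \<in> B y" for y v
  proof -
    define p where "p = (y, v)"
    have pG: "p \<in> Gr" using yv by (simp add: p_def Gr_def)
    from F2[OF pG] have bp: "bdd p" and Fp: "F p = q p" by auto
    define d where "d = p - wb"
    define Q where "Q = q p - F wb + inner wb d"
    have "Q \<ge> 0"
    proof (rule ccontr)
      assume "\<not> Q \<ge> 0" hence Qn: "Q < 0" by simp
      define s where "s = min 1 (- Q / (g d + 1))"
      have gd: "g d \<ge> 0" by (simp add: g_def)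
      have s0: "0 < s" using Qn gd by (simp add: s_def field_simps)
      have s1: "s \<le> 1" by (simp add: s_def)
      have sg: "s * g d < - Q" 
      proof -
        have "s \<le> - Q / (g d + 1)" unfolding s_def by (rule min.cobounded2)
        hence "s * g d \<le> (- Q / (g d + 1)) * g d" using gd by (rule mult_right_mono)
        also have "\<dots> < - Q" using gd Qn by (simp add: field_simps)
        finally show ?thesis .
      qed
      from conv[OF bwb bp, of s] s0 s1
      have bs: "bdd (wb + s *\<^sub>R d)" and Fs: "F (wb + s *\<^sub>R d) \<le> F wb + s * (F p - F wb)"
        by (auto simp: d_def)
      have "h wb \<le> h (wb + s *\<^sub>R d)" using opt bs by (simp add: Dm_def)
      also have "\<dots> \<le> F wb + s * (F p - F wb) + (g wb + s * inner wb d + s^2 * g d)"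
        unfolding h_def gexp using Fs by simp
      finally have "0 \<le> s * (Q + s * g d)" by (simp add: h_def Q_def Fp power2_eq_square algebra_simps)
      hence "0 \<le> Q + s * g d" using s0 by (simp add: zero_le_mult_iff)
      thus False using sg Qn by linarith
    qed
    moreover have "q wb \<le> F wb" by (rule F1[OF bwb])
    moreover have "Q = inner y v - F wb + inner xb y - inner xb xb + inner ub v - inner ub ub"
      by (simp add: Q_def d_def p_def wbe q_def inner_diff_right)
    moreover have "inner ((- ub) - y) ((- xb) - v) = inner ub xb + inner ub v + inner y xb + inner y v"
      by (simp add: inner_diff_left inner_diff_right)
    moreover have "inner (xb + ub) (xb + ub) = inner xb xb + inner xb ub + inner ub xb + inner ub ub"
      by (simp add: inner_add_left inner_add_right)
    moreover have "inner ub xb = inner xb ub" "inner y xb = inner xb y" by (rule inner_commute)+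
    moreover have "q wb = inner xb ub" by (simp add: q_def wbe)
    ultimately show ?thesis by linarith
  qed
  have "- xb \<in> B (- ub)"
  proof (rule maxi)
    fix y v assume "v \<in> B y"
    have "0 \<le> inner (xb + ub) (xb + ub)" by (rule inner_ge_zero)
    with ineq[OF \<open>v \<in> B y\<close>] show "0 \<le> inner (- ub - y) (- xb - v)" by linarith
  qed
  from ineq[OF this] have "inner (xb + ub) (xb + ub) \<le> 0" by simp
  hence "inner (xb + ub) (xb + ub) = 0" using inner_ge_zero[of "xb + ub"] by linarith
  hence "xb + ub = 0" by simp
  hence "ub = - xb" by (simp add: eq_neg_iff_add_eq_0 add.commute)
  with \<open>- xb \<in> B (- ub)\<close> show ?thesis by auto
qed

context
  fixes A :: "'a::{real_inner,complete_space} \<Rightarrow> 'a set"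
  assumes mm: "maximal_monotone A"
begin

lemma mono_A: "u \<in> A x \<Longrightarrow> v \<in> A y \<Longrightarrow> 0 \<le> inner (x - y) (u - v)"
  using mm unfolding maximal_monotone_def monotone_op_def by blast

lemma maxi_A: "(\<And>y v. v \<in> A y \<Longrightarrow> 0 \<le> inner (x - y) (u - v)) \<Longrightarrow> u \<in> A x"
  using mm unfolding maximal_monotone_def by blast

lemma graph_ne: "\<exists>y v. v \<in> A y"
proof (rule ccontr)
  assume H: "\<not> (\<exists>y v. v \<in> A y)"
  hence "(0::'a) \<in> A 0" by (intro maxi_A) auto
  thus False using H by blast
qed

lemma res_ex:
  assumes lam: "lam > 0"
  shows "\<exists>y. (1/lam) *\<^sub>R (x - y) \<in> A y"
proof -
  define B where "B z = (\<lambda>a. lam *\<^sub>R a) ` A (x + z)" for z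
  obtain y0 v0 where yv0: "v0 \<in> A y0" using graph_ne by blast
  have "\<exists>z. - z \<in> B z"
  proof (rule minty_core)
    fix z1 z2 u v assume "u \<in> B z1" "v \<in> B z2"
    then obtain a1 a2 where a: "a1 \<in> A (x + z1)" "a2 \<in> A (x + z2)" "u = lam *\<^sub>R a1" "v = lam *\<^sub>R a2"
      by (auto simp: B_def)
    have "0 \<le> inner ((x + z1) - (x + z2)) (a1 - a2)" by (rule mono_A[OF a(1,2)])
    hence "0 \<le> lam * inner (z1 - z2) (a1 - a2)" using lam by simp
    thus "0 \<le> inner (z1 - z2) (u - v)" by (simp add: a scaleR_diff_right[symmetric])
  next
    fix z w assume H: "\<And>z' w'. w' \<in> B z' \<Longrightarrow> 0 \<le> inner (z - z') (w - w')"
    have "(1/lam) *\<^sub>R w \<in> A (x + z)"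
    proof (rule maxi_A)
      fix y v assume yv: "v \<in> A y"
      have "lam *\<^sub>R v \<in> B (y - x)" using imageI[OF yv, of "\<lambda>a. lam *\<^sub>R a"] by (simp add: B_def)
      hence "0 \<le> inner (z - (y - x)) (w - lam *\<^sub>R v)" by (rule H)
      moreover have "inner (x + z - y) ((1/lam) *\<^sub>R w - v) = (1/lam) * inner (z - (y - x)) (w - lam *\<^sub>R v)"
      proof -
        have "(1/lam) *\<^sub>R w - v = (1/lam) *\<^sub>R (w - lam *\<^sub>R v)" using lam by (simp add: algebra_simps)
        moreover have "x + z - y = z - (y - x)" by simp
        ultimately show ?thesis by (simp only:) simp
      qed
      ultimately show "0 \<le> inner (x + z - y) ((1/lam) *\<^sub>R w - v)" using lam by simp
    qed
    hence "lam *\<^sub>R ((1/lam) *\<^sub>R w) \<in> B z" unfolding B_def by (rule imageI)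
    thus "w \<in> B z" using lam by simp
  next
    show "lam *\<^sub>R v0 \<in> B (y0 - x)" using imageI[OF yv0, of "\<lambda>a. lam *\<^sub>R a"] by (simp add: B_def)
  qed
  then obtain z a where za: "a \<in> A (x + z)" "- z = lam *\<^sub>R a" by (auto simp: B_def)
  have "(1/lam) *\<^sub>R (x - (x + z)) = a" using za(2) lam by (simp add: scaleR_minus_right[symmetric])
  thus ?thesis using za(1) by (intro exI[where x="x + z"]) simp
qed

lemma res_uniq:
  assumes lam: "lam > 0" and "(1/lam) *\<^sub>R (x - y1) \<in> A y1" "(1/lam) *\<^sub>R (x - y2) \<in> A y2"
  shows "y1 = y2"
proof -
  have "0 \<le> inner (y1 - y2) ((1/lam) *\<^sub>R (x - y1) - (1/lam) *\<^sub>R (x - y2))"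
    by (rule mono_A[OF assms(2,3)])
  also have "(1/lam) *\<^sub>R (x - y1) - (1/lam) *\<^sub>R (x - y2) = - ((1/lam) *\<^sub>R (y1 - y2))"
    by (simp add: algebra_simps)
  finally have "0 \<le> - ((1/lam) * inner (y1 - y2) (y1 - y2))" by simp
  hence h: "(1/lam) * inner (y1 - y2) (y1 - y2) \<le> 0" by simp
  have "inner (y1 - y2) (y1 - y2) = lam * ((1/lam) * inner (y1 - y2) (y1 - y2))" using lam by simp
  also have "\<dots> \<le> 0" by (rule mult_nonneg_nonpos[OF _ h]) (use lam in simp)
  finally have "inner (y1 - y2) (y1 - y2) \<le> 0" .
  hence "inner (y1 - y2) (y1 - y2) = 0" using inner_ge_zero[of "y1 - y2"] by linarith
  thus ?thesis by simp
qed

lemma res_in: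
  assumes lam: "lam > 0"
  shows "(1/lam) *\<^sub>R (x - resolvent A lam x) \<in> A (resolvent A lam x)"
proof -
  obtain y where y: "(1/lam) *\<^sub>R (x - y) \<in> A y" using res_ex[OF lam] by blast
  have "resolvent A lam x = y"
    unfolding resolvent_def by (rule the_equality, rule y, erule res_uniq[OF lam _ y])
  thus ?thesis using y by simp
qed

lemma res_eqI:
  assumes lam: "lam > 0" and y: "(1/lam) *\<^sub>R (x - y) \<in> A y"
  shows "resolvent A lam x = y"
  using res_uniq[OF lam res_in[OF lam] y] .

lemma res_fix:
  assumes lam: "lam > 0" and z: "0 \<in> A z"
  shows "resolvent A lam z = z"
  by (rule res_eqI[OF lam]) (simp add: z)

lemma res_fix_iff:
  assumes lam: "lam > 0"
  shows "resolvent A lam x = x \<longleftrightarrow> 0 \<in> A x"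
proof
  assume e: "resolvent A lam x = x"
  show "0 \<in> A x" using res_in[OF lam, of x] unfolding e by simp
next
  assume "0 \<in> A x" thus "resolvent A lam x = x" by (rule res_fix[OF lam])
qed

lemma res_firm:
  assumes lam: "lam > 0"
  shows "0 \<le> inner (resolvent A lam x - resolvent A lam y)
                    ((x - resolvent A lam x) - (y - resolvent A lam y))"
proof -
  have "0 \<le> inner (resolvent A lam x - resolvent A lam y)
          ((1/lam) *\<^sub>R (x - resolvent A lam x) - (1/lam) *\<^sub>R (y - resolvent A lam y))"
    by (rule mono_A[OF res_in[OF lam] res_in[OF lam]])
  also have "\<dots> = (1/lam) * inner (resolvent A lam x - resolvent A lam y)
                    ((x - resolvent A lam x) - (y - resolvent A lam y))"
    by (simp add: scaleR_diff_right[symmetric])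
  finally show ?thesis using lam by (simp add: zero_le_divide_iff)
qed

lemma nonexp_aux:
  fixes a b :: 'a
  assumes "0 \<le> inner a b"
  shows "norm a \<le> norm (a + b)" "norm b \<le> norm (a + b)"
proof -
  have e: "(norm (a + b))^2 = (norm a)^2 + 2 * inner a b + (norm b)^2"
    by (simp add: power2_norm_eq_inner inner_add_left inner_add_right inner_commute[of b a])
  have na: "0 \<le> (norm a)^2" and nb: "0 \<le> (norm b)^2" by simp_all
  have "(norm a)^2 \<le> (norm (a + b))^2" using e assms nb by linarith
  thus "norm a \<le> norm (a + b)" by (rule power2_le_imp_le) simp
  have "(norm b)^2 \<le> (norm (a + b))^2" using e assms na by linarith
  thus "norm b \<le> norm (a + b)" by (rule power2_le_imp_le) simp
qed

lemma res_nonexp: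
  assumes lam: "lam > 0"
  shows "norm (resolvent A lam x - resolvent A lam y) \<le> norm (x - y)"
    and "norm ((x - resolvent A lam x) - (y - resolvent A lam y)) \<le> norm (x - y)"
proof -
  let ?a = "resolvent A lam x - resolvent A lam y"
  let ?b = "(x - resolvent A lam x) - (y - resolvent A lam y)"
  have s: "?a + ?b = x - y" by simp
  have "norm ?a \<le> norm (?a + ?b)" by (rule nonexp_aux(1)[OF res_firm[OF lam]])
  thus "norm ?a \<le> norm (x - y)" by (simp only: s)
  have "norm ?b \<le> norm (?a + ?b)" by (rule nonexp_aux(2)[OF res_firm[OF lam]])
  thus "norm ?b \<le> norm (x - y)" by (simp only: s)
qed

lemma res_u_le:
  assumes lam: "lam > 0" and z: "0 \<in> A z"
  shows "norm (x - resolvent A lam x) \<le> norm (x - z)"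
  using res_nonexp(2)[OF lam, of x z] res_fix[OF lam z] by simp

lemma res_key:
  assumes lam: "lam > 0" and mu: "mu > 0"
  shows "0 \<le> inner (resolvent A lam x - resolvent A mu x)
                 (mu *\<^sub>R (x - resolvent A lam x) - lam *\<^sub>R (x - resolvent A mu x))"
proof -
  let ?a = "resolvent A lam x" and ?b = "resolvent A mu x"
  have "0 \<le> inner (?a - ?b) ((1/lam) *\<^sub>R (x - ?a) - (1/mu) *\<^sub>R (x - ?b))"
    by (rule mono_A[OF res_in[OF lam] res_in[OF mu]])
  also have "(1/lam) *\<^sub>R (x - ?a) - (1/mu) *\<^sub>R (x - ?b)
      = (1/(lam*mu)) *\<^sub>R (mu *\<^sub>R (x - ?a) - lam *\<^sub>R (x - ?b))"
    using lam mu by (simp add: algebra_simps)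
  finally have "0 \<le> inner (?a - ?b) (mu *\<^sub>R (x - ?a) - lam *\<^sub>R (x - ?b)) / (lam * mu)"
    by simp
  moreover have "lam * mu > 0" using lam mu by simp
  ultimately show ?thesis by (simp add: zero_le_divide_iff)
qed

lemma res_u_mono:
  assumes lam: "lam > 0" and le: "lam \<le> mu"
  shows "norm (x - resolvent A lam x) \<le> norm (x - resolvent A mu x)"
proof -
  have mu: "mu > 0" using lam le by simp
  define \<alpha> where "\<alpha> = x - resolvent A lam x"
  define \<beta> where "\<beta> = x - resolvent A mu x"
  have k: "0 \<le> inner (\<beta> - \<alpha>) (mu *\<^sub>R \<alpha> - lam *\<^sub>R \<beta>)"
    using res_key[OF lam mu] by (simp add: \<alpha>_def \<beta>_def)
  have "inner (\<beta> - \<alpha>) (mu *\<^sub>R \<alpha> - lam *\<^sub>R \<beta>)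
      = (lam + mu) * inner \<alpha> \<beta> - lam * inner \<beta> \<beta> - mu * inner \<alpha> \<alpha>"
    by (simp add: inner_diff_left inner_diff_right inner_commute[of \<beta> \<alpha>] algebra_simps)
  hence 1: "lam * (norm \<beta>)^2 + mu * (norm \<alpha>)^2 \<le> (lam + mu) * inner \<alpha> \<beta>"
    using k by (simp add: power2_norm_eq_inner)
  have "(lam + mu) * inner \<alpha> \<beta> \<le> (lam + mu) * (norm \<alpha> * norm \<beta>)"
    using lam mu by (intro mult_left_mono norm_cauchy_schwarz) auto
  with 1 have 2: "lam * (norm \<beta>)^2 + mu * (norm \<alpha>)^2 \<le> (lam + mu) * (norm \<alpha> * norm \<beta>)"
    by linarith
  show "norm \<alpha> \<le> norm \<beta>"
  proof (rule ccontr)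
    assume "\<not> norm \<alpha> \<le> norm \<beta>"
    hence gt: "norm \<beta> < norm \<alpha>" by simp
    have "(norm \<alpha> - norm \<beta>) * (mu * norm \<alpha> - lam * norm \<beta>) \<le> 0"
      using 2 by (simp add: algebra_simps power2_eq_square)
    hence "mu * norm \<alpha> - lam * norm \<beta> \<le> 0" using gt by (simp add: mult_le_0_iff)
    moreover have "lam * norm \<beta> \<le> mu * norm \<beta>" using le by (simp add: mult_right_mono)
    moreover have "mu * norm \<beta> < mu * norm \<alpha>" using gt mu by simp
    ultimately show False by linarith
  qed
qed

lemma res_lam_lip:
  assumes lam: "lam > 0" and mu: "mu > 0"
  shows "norm (resolvent A lam x - resolvent A mu x) \<le> \<bar>mu - lam\<bar> / mu * norm (x - resolvent A mu x)"
proof -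
  define \<alpha> where "\<alpha> = x - resolvent A lam x"
  define \<beta> where "\<beta> = x - resolvent A mu x"
  have k: "0 \<le> inner (\<beta> - \<alpha>) (mu *\<^sub>R \<alpha> - lam *\<^sub>R \<beta>)"
    using res_key[OF lam mu] by (simp add: \<alpha>_def \<beta>_def)
  have "mu *\<^sub>R \<alpha> - lam *\<^sub>R \<beta> = (- mu) *\<^sub>R (\<beta> - \<alpha>) + (mu - lam) *\<^sub>R \<beta>"
    by (simp add: algebra_simps)
  hence "inner (\<beta> - \<alpha>) (mu *\<^sub>R \<alpha> - lam *\<^sub>R \<beta>) = - mu * (norm (\<beta> - \<alpha>))^2 + (mu - lam) * inner (\<beta> - \<alpha>) \<beta>"
    by (simp add: inner_add_right inner_diff_right power2_norm_eq_inner)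
  with k have 1: "mu * (norm (\<beta> - \<alpha>))^2 \<le> (mu - lam) * inner (\<beta> - \<alpha>) \<beta>" by linarith
  have "(mu - lam) * inner (\<beta> - \<alpha>) \<beta> \<le> \<bar>mu - lam\<bar> * (norm (\<beta> - \<alpha>) * norm \<beta>)"
  proof -
    have "(mu - lam) * inner (\<beta> - \<alpha>) \<beta> \<le> \<bar>(mu - lam) * inner (\<beta> - \<alpha>) \<beta>\<bar>" by simp
    also have "\<dots> = \<bar>mu - lam\<bar> * \<bar>inner (\<beta> - \<alpha>) \<beta>\<bar>" by (simp add: abs_mult)
    also have "\<dots> \<le> \<bar>mu - lam\<bar> * (norm (\<beta> - \<alpha>) * norm \<beta>)"
      by (intro mult_left_mono Cauchy_Schwarz_ineq2) auto
    finally show ?thesis .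
  qed
  with 1 have 2: "mu * (norm (\<beta> - \<alpha>) * norm (\<beta> - \<alpha>)) \<le> (\<bar>mu - lam\<bar> * norm \<beta>) * norm (\<beta> - \<alpha>)"
    by (simp add: power2_eq_square algebra_simps)
  have "mu * norm (\<beta> - \<alpha>) \<le> \<bar>mu - lam\<bar> * norm \<beta>"
  proof (cases "norm (\<beta> - \<alpha>) = 0")
    case True thus ?thesis by simp
  next
    case False
    hence "0 < norm (\<beta> - \<alpha>)" by simp
    thus ?thesis using 2 by (simp add: mult.assoc[symmetric] mult_le_cancel_right)
  qed
  hence fin: "norm (\<beta> - \<alpha>) \<le> \<bar>mu - lam\<bar> / mu * norm \<beta>" using mu by (simp add: field_simps)
  have eq: "resolvent A lam x - resolvent A mu x = \<beta> - \<alpha>" by (simp add: \<alpha>_def \<beta>_def)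
  show ?thesis unfolding eq \<beta>_def[symmetric] by (rule fin)
qed

end

lemma pow_diff_le:
  fixes a b R :: real
  assumes a: "0 \<le> a" "a \<le> R" and b: "0 \<le> b" "b \<le> R"
  shows "\<bar>a^n - b^n\<bar> \<le> real n * R^(n-1) * \<bar>a - b\<bar>"
proof (induction n)
  case 0 show ?case by simp
next
  case (Suc n)
  have R: "0 \<le> R" using a by simp
  have eq: "a^(Suc n) - b^(Suc n) = a * (a^n - b^n) + (a - b) * b^n" by (simp add: algebra_simps)
  have "\<bar>a^(Suc n) - b^(Suc n)\<bar> \<le> \<bar>a * (a^n - b^n)\<bar> + \<bar>(a - b) * b^n\<bar>"
    unfolding eq by (rule abs_triangle_ineq)
  also have "\<dots> = a * \<bar>a^n - b^n\<bar> + \<bar>a - b\<bar> * b^n" using a b by (simp add: abs_mult)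
  also have "\<dots> \<le> R * (real n * R^(n-1) * \<bar>a - b\<bar>) + \<bar>a - b\<bar> * R^n"
    by (intro add_mono mult_mono Suc.IH power_mono mult_left_mono) (use a b R in auto)
  also have "\<dots> = real (Suc n) * R^(Suc n - 1) * \<bar>a - b\<bar>"
    by (cases n) (simp_all add: algebra_simps)
  finally show ?case .
qed

locale clsys =
  fixes A :: "'a::{real_inner,complete_space} \<Rightarrow> 'a set" and \<theta> :: real and p :: nat and zs :: 'a
  assumes mm: "maximal_monotone A" and th: "\<theta> > 0" and p1: "p \<ge> 1" and zs: "0 \<in> A zs"
begin

definition u :: "real \<Rightarrow> 'a \<Rightarrow> real" where "u l x = norm (x - resolvent A l x)"
definition phi :: "real \<Rightarrow> 'a \<Rightarrow> real" where "phi l x = l * u l x ^ (p - 1)"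
definition Lc :: "real \<Rightarrow> 'a \<Rightarrow> real" where
  "Lc M x = (if phi M x \<le> \<theta> then M else (THE l. 0 < l \<and> phi l x = \<theta>))"

lemma u_nonneg: "0 \<le> u l x" by (simp add: u_def)

lemma u_le: "0 < l \<Longrightarrow> u l x \<le> norm (x - zs)"
  unfolding u_def by (rule res_u_le[OF mm _ zs])

lemma u_mono: "0 < l \<Longrightarrow> l \<le> m \<Longrightarrow> u l x \<le> u m x"
  unfolding u_def by (rule res_u_mono[OF mm])

lemma u_zero_iff: "0 < l \<Longrightarrow> u l x = 0 \<longleftrightarrow> 0 \<in> A x"
  unfolding u_def using res_fix_iff[OF mm] by (metis eq_iff_diff_eq_0 norm_eq_zero)

lemma u_lip_x: "0 < l \<Longrightarrow> \<bar>u l x - u l y\<bar> \<le> norm (x - y)"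
  unfolding u_def using norm_triangle_ineq3 res_nonexp(2)[OF mm] order_trans by blast

lemma u_lip_l: "0 < l \<Longrightarrow> 0 < m \<Longrightarrow> \<bar>u l x - u m x\<bar> \<le> \<bar>m - l\<bar> / m * u m x"
proof -
  assume l: "0 < l" and m: "0 < m"
  have "\<bar>u l x - u m x\<bar> \<le> norm ((x - resolvent A l x) - (x - resolvent A m x))"
    unfolding u_def by (rule norm_triangle_ineq3)
  also have "\<dots> = norm (resolvent A l x - resolvent A m x)" by (simp add: norm_minus_commute)
  also have "\<dots> \<le> \<bar>m - l\<bar> / m * u m x" unfolding u_def by (rule res_lam_lip[OF mm l m])
  finally show ?thesis .
qed

lemma phi_grow: "0 < l \<Longrightarrow> l \<le> m \<Longrightarrow> m * phi l x \<le> l * phi m x"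
proof -
  assume l: "0 < l" and lm: "l \<le> m"
  have "u l x ^ (p-1) \<le> u m x ^ (p-1)" by (intro power_mono u_mono l lm u_nonneg)
  hence "(m * l) * u l x ^ (p-1) \<le> (m * l) * u m x ^ (p-1)" using l lm by (intro mult_left_mono) auto
  thus ?thesis by (simp add: phi_def algebra_simps)
qed

lemma phi_strict: "0 < l \<Longrightarrow> l < m \<Longrightarrow> phi l x = \<theta> \<Longrightarrow> \<theta> < phi m x"
proof -
  assume l: "0 < l" and lm: "l < m" and e: "phi l x = \<theta>"
  have "m * \<theta> \<le> l * phi m x" using phi_grow[OF l, of m x] lm e by simp
  moreover have "l * \<theta> < m * \<theta>" using lm th by simp
  ultimately have "l * \<theta> < l * phi m x" by linarith
  thus ?thesis using l by simp
qed

lemma phi_root_uniq: "0 < l \<Longrightarrow> 0 < m \<Longrightarrow> phi l x = \<theta> \<Longrightarrow> phi m x = \<theta> \<Longrightarrow> l = m"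
  by (metis linorder_neqE_linordered_idom order_less_irrefl phi_strict)

lemma phi_small: "0 < l \<Longrightarrow> phi l x \<le> l * norm (x - zs) ^ (p - 1)"
  unfolding phi_def by (intro mult_left_mono power_mono u_le u_nonneg) auto

lemma phi_cont:
  assumes a: "0 < a"
  shows "continuous_on {a..b} (\<lambda>l. phi l x)"
proof -
  have "continuous_on {a..b} (\<lambda>l. u l x)"
  proof (rule lipschitz_on_continuous_on[where L="norm (x - zs) / a"], rule lipschitz_onI)
    fix l m assume lm: "l \<in> {a..b}" "m \<in> {a..b}"
    hence l: "0 < l" and m: "0 < m" using a by auto
    have "\<bar>u l x - u m x\<bar> \<le> \<bar>m - l\<bar> / m * u m x" by (rule u_lip_l[OF l m])
    also have "\<dots> \<le> \<bar>m - l\<bar> / a * norm (x - zs)"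
      using lm a by (intro mult_mono divide_left_mono u_le m u_nonneg) auto
    finally show "dist (u l x) (u m x) \<le> norm (x - zs) / a * dist l m"
      by (simp add: dist_real_def abs_minus_commute field_simps)
  qed (use a in simp)
  thus ?thesis unfolding phi_def by (intro continuous_intros)
qed

lemma root_ex:
  assumes M: "0 < M" and gt: "\<theta> < phi M x"
  shows "\<exists>l. 0 < l \<and> l < M \<and> phi l x = \<theta>"
proof -
  define R1 where "R1 = norm (x - zs) ^ (p - 1) + 1"
  have R1: "0 < R1" by (simp add: R1_def add_nonneg_pos)
  define e where "e = min (M/2) (\<theta> / (2 * R1))"
  have e: "0 < e" "e \<le> M" using M th R1 by (auto simp: e_def)
  have "phi e x \<le> e * norm (x - zs) ^ (p - 1)" by (rule phi_small[OF e(1)])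
  also have "\<dots> \<le> e * R1" using e by (intro mult_left_mono) (auto simp: R1_def)
  also have "\<dots> \<le> \<theta> / (2 * R1) * R1" using R1 by (intro mult_right_mono) (auto simp: e_def)
  also have "\<dots> < \<theta>" using R1 th by simp
  finally have lt: "phi e x < \<theta>" .
  obtain l where l: "e \<le> l" "l \<le> M" "phi l x = \<theta>"
    using IVT'[of "\<lambda>l. phi l x" e \<theta> M, OF _ _ e(2) phi_cont[OF e(1)]] lt gt by auto
  have "l \<noteq> M" using l gt by auto
  thus ?thesis using l e by (intro exI[of _ l]) auto
qed

lemma Lc_else:
  assumes M: "0 < M" and gt: "\<not> phi M x \<le> \<theta>"
  shows "0 < Lc M x \<and> Lc M x < M \<and> phi (Lc M x) x = \<theta>"
proof -
  have "\<theta> < phi M x" using gt by simp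
  then obtain l where l: "0 < l" "l < M" "phi l x = \<theta>" using root_ex[OF M] by blast
  have "Lc M x = l"
    unfolding Lc_def if_not_P[OF gt]
    by (rule the_equality) (use l phi_root_uniq in auto)
  thus ?thesis using l by simp
qed

lemma Lc_pos: "0 < M \<Longrightarrow> 0 < Lc M x"
  using Lc_else by (cases "phi M x \<le> \<theta>") (auto simp: Lc_def)

lemma Lc_le: "0 < M \<Longrightarrow> Lc M x \<le> M"
  using Lc_else by (cases "phi M x \<le> \<theta>") (auto simp: Lc_def less_imp_le)

lemma Lc_phi_le: "0 < M \<Longrightarrow> phi (Lc M x) x \<le> \<theta>"
  using Lc_else by (cases "phi M x \<le> \<theta>") (auto simp: Lc_def)

lemma Lc_lt: "0 < M \<Longrightarrow> Lc M x < M \<Longrightarrow> phi (Lc M x) x = \<theta>"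
  using Lc_else by (cases "phi M x \<le> \<theta>") (auto simp: Lc_def)

lemma Lc_eq:
  assumes l: "0 < l" "l < M" "phi l x = \<theta>"
  shows "Lc M x = l"
proof -
  have M: "0 < M" using l by simp
  have "\<theta> < phi M x" by (rule phi_strict[OF l(1) l(2) l(3)])
  hence "\<not> phi M x \<le> \<theta>" by simp
  from Lc_else[OF M this] show ?thesis using phi_root_uniq l by blast
qed

lemma Lc_lower:
  assumes M: "0 < M" and R: "0 < R" and x: "norm (x - zs) \<le> R"
  shows "min M (\<theta> / R^(p-1)) \<le> Lc M x"
proof (cases "Lc M x < M")
  case True
  hence e: "phi (Lc M x) x = \<theta>" by (rule Lc_lt[OF M])
  have e2: "\<theta> = Lc M x * u (Lc M x) x ^ (p-1)" using e by (simp add: phi_def)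
  have "Lc M x * u (Lc M x) x ^ (p-1) \<le> Lc M x * R^(p-1)"
    by (intro mult_left_mono power_mono order_trans[OF u_le x] u_nonneg Lc_pos M less_imp_le)
  hence "\<theta> \<le> Lc M x * R^(p-1)" using e2 by linarith
  hence "\<theta> / R^(p-1) \<le> Lc M x" using R by (simp add: field_simps)
  thus ?thesis by simp
next
  case False thus ?thesis using Lc_le[OF M, of x] by simp
qed

lemma Lc_lip_aux:
  assumes M: "0 < M" and R: "0 < R" and x: "norm (x - zs) \<le> R" and y: "norm (y - zs) \<le> R"
    and le: "Lc M x \<le> Lc M y"
  shows "Lc M y - Lc M x \<le> M^2 * (real (p-1) * R^(p-2)) / \<theta> * norm (x - y)"
proof (cases "Lc M x = Lc M y")
  case True thus ?thesis using M R th by simp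
next
  case False
  define l where "l = Lc M x"
  define m where "m = Lc M y"
  have lm: "l < m" using le False by (simp add: l_def m_def)
  have l0: "0 < l" and mM: "m \<le> M" and m0: "0 < m" using Lc_pos Lc_le M by (auto simp: l_def m_def)
  have lM: "l < M" using lm mM by simp
  have phil: "phi l x = \<theta>" using Lc_lt[OF M] lM by (simp add: l_def)
  have phim: "phi m y \<le> \<theta>" using Lc_phi_le[OF M] by (simp add: m_def)
  have g: "m * \<theta> \<le> l * phi m x" using phi_grow[OF l0, of m x] lm phil by simp
  have "\<bar>u m x ^ (p-1) - u m y ^ (p-1)\<bar> \<le> real (p-1) * R^(p-1-1) * \<bar>u m x - u m y\<bar>"
    by (rule pow_diff_le) (use u_nonneg order_trans[OF u_le[OF m0] x] order_trans[OF u_le[OF m0] y] in auto)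
  also have "\<dots> \<le> real (p-1) * R^(p-1-1) * norm (x - y)"
    using R by (intro mult_left_mono u_lip_x m0) auto
  finally have pd: "u m x ^ (p-1) - u m y ^ (p-1) \<le> real (p-1) * R^(p-2) * norm (x - y)"
    by (simp add: numeral_2_eq_2)
  have "phi m x - phi m y = m * (u m x ^ (p-1) - u m y ^ (p-1))" by (simp add: phi_def algebra_simps)
  also have "\<dots> \<le> m * (real (p-1) * R^(p-2) * norm (x - y))" using pd m0 by (intro mult_left_mono) auto
  finally have pd2: "phi m x \<le> phi m y + m * (real (p-1) * R^(p-2) * norm (x - y))" by simp
  define D where "D = real (p-1) * R^(p-2) * norm (x - y)"
  have D0: "0 \<le> D" using R by (simp add: D_def)
  have "m * \<theta> \<le> l * (\<theta> + m * D)"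
    using g pd2 phim l0 unfolding D_def[symmetric]
    by (smt (verit) mult_left_mono)
  hence "(m - l) * \<theta> \<le> l * m * D" by (simp add: algebra_simps)
  also have "\<dots> \<le> M * M * D" using l0 m0 lM mM D0 by (intro mult_mono) auto
  finally have "(m - l) * \<theta> \<le> M^2 * D" by (simp add: power2_eq_square)
  hence "m - l \<le> M^2 * D / \<theta>" using th by (simp add: field_simps)
  thus ?thesis by (simp add: l_def m_def D_def)
qed

lemma Lc_lip:
  assumes M: "0 < M" and R: "0 < R" and x: "norm (x - zs) \<le> R" and y: "norm (y - zs) \<le> R"
  shows "\<bar>Lc M x - Lc M y\<bar> \<le> M^2 * (real (p-1) * R^(p-2)) / \<theta> * norm (x - y)"
proof (cases "Lc M x \<le> Lc M y")
  case True
  have a: "Lc M y - Lc M x \<le> M^2 * (real (p-1) * R^(p-2)) / \<theta> * norm (x - y)"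
    by (rule Lc_lip_aux[OF M R x y True])
  have "\<bar>Lc M x - Lc M y\<bar> = Lc M y - Lc M x" using True by simp
  thus ?thesis using a by linarith
next
  case False
  have a: "Lc M x - Lc M y \<le> M^2 * (real (p-1) * R^(p-2)) / \<theta> * norm (y - x)"
    by (rule Lc_lip_aux[OF M R y x]) (use False in simp)
  have "\<bar>Lc M x - Lc M y\<bar> = Lc M x - Lc M y" using False by simp
  moreover have "norm (y - x) = norm (x - y)" by (rule norm_minus_commute)
  ultimately show ?thesis using a by simp
qed

lemma Ukey:
  assumes l: "0 < l" and m: "0 < m" and c: "m < l \<Longrightarrow> phi l x \<le> phi m y"
  shows "u l x - norm (y - x) \<le> u m y"
proof (cases "l \<le> m")
  case True
  have "u l y \<le> u m y" by (rule u_mono[OF l True])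
  moreover have "\<bar>u l x - u l y\<bar> \<le> norm (x - y)" by (rule u_lip_x[OF l])
  ultimately show ?thesis by (simp add: norm_minus_commute abs_le_iff)
next
  case False
  hence ml: "m < l" by simp
  show ?thesis
  proof (cases "u l x = 0")
    case True
    have "0 \<le> norm (y - x)" by simp
    thus ?thesis using True u_nonneg[of m y] by linarith
  next
    case False
    hence pos: "0 < u l x ^ (p-1)" using u_nonneg[of l x] by simp
    have "m * u l x ^ (p-1) < l * u l x ^ (p-1)" using ml pos by simp
    also have "\<dots> \<le> m * u m y ^ (p-1)" using c[OF ml] by (simp add: phi_def)
    finally have "u l x ^ (p-1) < u m y ^ (p-1)" using m by simp
    hence "u l x < u m y" by (rule power_less_imp_less_base) (rule u_nonneg)
    thus ?thesis using norm_ge_zero[of "y - x"] by linarith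
  qed
qed

end

lemma deriv_sq:
  fixes x :: "real \<Rightarrow> 'a::real_inner"
  assumes "(x has_vector_derivative v) (at t within S)"
  shows "((\<lambda>s. inner (x s - c) (x s - c)) has_field_derivative 2 * inner (x t - c) v) (at t within S)"
proof -
  have d: "((\<lambda>s. x s - c) has_derivative (\<lambda>h. h *\<^sub>R v)) (at t within S)"
    using assms unfolding has_vector_derivative_def by (auto intro!: derivative_eq_intros)
  have "((\<lambda>s. inner (x s - c) (x s - c)) has_derivative
          (\<lambda>h. inner (x t - c) (h *\<^sub>R v) + inner (h *\<^sub>R v) (x t - c))) (at t within S)"
    by (rule has_derivative_inner[OF d d])
  moreover have "(\<lambda>h. inner (x t - c) (h *\<^sub>R v) + inner (h *\<^sub>R v) (x t - c)) = (\<lambda>h. (2 * inner (x t - c) v) * h)"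
    by (rule ext) (simp add: inner_commute[of v] algebra_simps)
  ultimately show ?thesis unfolding has_field_derivative_def by (metis mult.commute)
qed

lemma deriv_nonpos_dec:
  fixes f :: "real \<Rightarrow> real"
  assumes ab: "a \<le> b"
    and d: "\<And>t. t \<in> {a..b} \<Longrightarrow> (f has_field_derivative f' t) (at t within {a..b})"
    and nonpos: "\<And>t. t \<in> {a..b} \<Longrightarrow> f' t \<le> 0"
  shows "f b \<le> f a"
proof -
  obtain t where t: "t \<in> {a..b}" and eq: "f b - f a = f' t * (b - a)"
    using mvt_very_simple[OF ab, of f "\<lambda>t. (*) (f' t)"] d
    unfolding has_field_derivative_def by auto
  have "f' t * (b - a) \<le> 0" using nonpos[OF t] ab by (simp add: mult_nonpos_nonneg)
  thus ?thesis using eq by simp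
qed

lemma deriv_local:
  fixes x :: "real \<Rightarrow> 'a::real_normed_vector"
  assumes d: "(x has_vector_derivative v) (at t within {0..})" and t: "0 \<le> t" and e: "0 < e"
  shows "\<exists>d>0. \<forall>h. 0 < h \<longrightarrow> h < d \<longrightarrow> norm (x (t + h) - x t) \<le> h * (norm v + e)"
proof -
  from d have "(x has_derivative (\<lambda>h. h *\<^sub>R v)) (at t within {0..})"
    by (simp add: has_vector_derivative_def)
  then obtain d where d0: "d > 0" and dd: "\<forall>y\<in>{0..}. norm (y - t) < d \<longrightarrow>
      norm (x y - x t - (y - t) *\<^sub>R v) \<le> e * norm (y - t)"
    using e unfolding has_derivative_within_alt by blast
  show ?thesis
  proof (intro exI[of _ d] conjI allI impI d0)
    fix h :: real assume h: "0 < h" "h < d"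
    have "norm (x (t + h) - x t - h *\<^sub>R v) \<le> e * h"
      using dd[rule_format, of "t + h"] h t by simp
    moreover have "norm (x (t + h) - x t) \<le> norm (x (t + h) - x t - h *\<^sub>R v) + norm (h *\<^sub>R v)"
      using norm_triangle_ineq[of "x (t + h) - x t - h *\<^sub>R v" "h *\<^sub>R v"] by simp
    moreover have "norm (h *\<^sub>R v) = h * norm v" using h by simp
    ultimately have "norm (x (t + h) - x t) \<le> e * h + h * norm v" by linarith
    thus "norm (x (t + h) - x t) \<le> h * (norm v + e)" by (simp add: algebra_simps)
  qed
qed

lemma exp_aux:
  fixes \<eta> h :: real
  assumes \<eta>: "0 < \<eta>" and h: "0 \<le> h" "h \<le> \<eta> / (2 * (1 + \<eta>)^2)"
  shows "exp (- ((1 + \<eta>) * h)) \<le> 1 - h * (1 + \<eta>/2)"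
proof -
  define a where "a = (1 + \<eta>) * h"
  have a0: "0 \<le> a" using \<eta> h by (simp add: a_def)
  have hb: "h * (1 + \<eta>)^2 \<le> \<eta> / 2" using h \<eta> by (simp add: field_simps)
  have q0: "1 + \<eta>/2 \<le> 1 + \<eta>" using \<eta> by simp
  have "h * (1 + \<eta>) * (1 + \<eta>/2) \<le> h * (1 + \<eta>) * (1 + \<eta>)"
    by (rule mult_left_mono[OF q0]) (use h \<eta> in simp)
  hence q: "h * (1 + \<eta>) * (1 + \<eta>/2) \<le> h * (1 + \<eta>)^2" by (simp add: power2_eq_square mult.assoc)
  have "1 \<le> (1 + a) * (1 - h * (1 + \<eta>/2))"
  proof -
    have "(1 + a) * (1 - h * (1 + \<eta>/2)) = 1 + h * (\<eta>/2) - h * (h * (1 + \<eta>) * (1 + \<eta>/2))"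
      unfolding a_def by (simp add: field_simps)
    moreover have "h * (h * (1 + \<eta>) * (1 + \<eta>/2)) \<le> h * (\<eta>/2)"
      using q hb h by (intro mult_left_mono) auto
    ultimately show ?thesis by linarith
  qed
  hence pos: "0 < 1 - h * (1 + \<eta>/2)" using a0 by (smt (verit) mult_nonneg_nonpos)
  have "exp (- a) = 1 / exp a" by (simp add: exp_minus field_simps)
  also have "\<dots> \<le> 1 / (1 + a)" using a0 by (intro divide_left_mono) (auto simp: add_pos_nonneg)
  also have "\<dots> \<le> 1 - h * (1 + \<eta>/2)"
    using \<open>1 \<le> (1 + a) * (1 - h * (1 + \<eta>/2))\<close> a0 by (simp add: field_simps)
  finally show ?thesis by (simp add: a_def)
qed

lemma dini_exp_eta:
  fixes g :: "real \<Rightarrow> real"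
  assumes cont: "continuous_on {0..T} g" and g0: "0 < g 0" and \<eta>: "0 < \<eta>"
    and dini: "\<And>t e. 0 \<le> t \<Longrightarrow> t < T \<Longrightarrow> 0 < e \<Longrightarrow>
        \<exists>d>0. \<forall>h. 0 < h \<longrightarrow> h < d \<longrightarrow> t + h \<le> T \<longrightarrow> g t - h * (g t + e) \<le> g (t + h)"
  shows "\<forall>t\<in>{0..T}. g 0 * exp (- ((1 + \<eta>) * t)) \<le> g t"
proof (rule ccontr)
  define \<psi> where "\<psi> t = g 0 * exp (- ((1 + \<eta>) * t))" for t
  assume "\<not> (\<forall>t\<in>{0..T}. g 0 * exp (- ((1 + \<eta>) * t)) \<le> g t)"
  then obtain s0 where s0: "s0 \<in> {0..T}" "g s0 < \<psi> s0" by (auto simp: \<psi>_def not_le)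
  define S where "S = {t \<in> {0..T}. g t < \<psi> t}"
  have Sne: "S \<noteq> {}" using s0 by (auto simp: S_def)
  have Sb: "bdd_below S" by (rule bdd_belowI[where m=0]) (auto simp: S_def)
  define c where "c = Inf S"
  have c0: "0 \<le> c" unfolding c_def by (rule cInf_greatest[OF Sne]) (auto simp: S_def)
  have cle: "c \<le> t" if "t \<in> S" for t unfolding c_def by (rule cInf_lower[OF that Sb])
  have cT: "c \<le> T" using cle[of s0] s0 by (auto simp: S_def)
  have cont2: "continuous_on {0..T} (\<lambda>t. g t - \<psi> t)"
    unfolding \<psi>_def by (intro continuous_intros cont)
  have gc: "\<psi> c \<le> g c"
  proof (rule ccontr)
    assume "\<not> \<psi> c \<le> g c"
    hence neg: "g c - \<psi> c < 0" by simp
    show False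
    proof (cases "c = 0")
      case True thus False using neg by (simp add: \<psi>_def)
    next
      case False
      hence cpos: "0 < c" using c0 by simp
      have "continuous (at c within {0..T}) (\<lambda>t. g t - \<psi> t)"
        using cont2 c0 cT by (simp add: continuous_on_eq_continuous_within)
      then obtain \<delta> where \<delta>: "\<delta> > 0" and H: "\<forall>t\<in>{0..T}. dist t c < \<delta> \<longrightarrow> dist (g t - \<psi> t) (g c - \<psi> c) < - (g c - \<psi> c)"
        using neg unfolding continuous_within_eps_delta by (meson neg_0_less_iff_less)
      define t where "t = max 0 (c - \<delta>/2)"
      have t: "t \<in> {0..T}" "dist t c < \<delta>" "t < c" using \<delta> cpos cT by (auto simp: t_def dist_real_def)
      have "g t - \<psi> t < 0" using H t(1,2) by (auto simp: dist_real_def)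
      hence "t \<in> S" using t by (simp add: S_def)
      thus False using cle t(3) by fastforce
    qed
  qed
  have cS: "c \<notin> S" using gc by (simp add: S_def)
  have cT': "c < T"
  proof -
    have "s0 \<in> S" using s0 by (simp add: S_def)
    thus ?thesis using cle[of s0] cS s0 by (cases "c = s0") auto
  qed
  have psic: "0 < \<psi> c" using g0 by (simp add: \<psi>_def)
  define e where "e = \<eta> * \<psi> c / 2"
  have e0: "0 < e" using \<eta> psic by (simp add: e_def)
  obtain d where d0: "d > 0" and dd: "\<forall>h. 0 < h \<longrightarrow> h < d \<longrightarrow> c + h \<le> T \<longrightarrow> g c - h * (g c + e) \<le> g (c + h)"
    using dini[OF c0 cT' e0] by blast
  define \<delta> where "\<delta> = min (min d 1) (\<eta> / (2 * (1 + \<eta>)^2))"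
  have \<delta>0: "0 < \<delta>" using d0 \<eta> by (simp add: \<delta>_def)
  obtain s where sS: "s \<in> S" and sl: "s < c + \<delta>"
    using cInf_lessD[OF Sne, of "c + \<delta>"] \<delta>0 by (auto simp: c_def)
  define h where "h = s - c"
  have h0: "0 < h" using cle[OF sS] cS sS by (cases "s = c") (auto simp: h_def)
  have hd: "h < \<delta>" using sl by (simp add: h_def)
  have sT: "c + h \<le> T" using sS by (simp add: S_def h_def)
  have h1: "h \<le> 1" and hd2: "h < d" and h3: "h \<le> \<eta> / (2 * (1 + \<eta>)^2)"
    using hd by (auto simp: \<delta>_def)
  have "g c - h * (g c + e) \<le> g (c + h)" using dd h0 hd2 sT by blast
  moreover have "\<psi> c * (1 - h * (1 + \<eta>/2)) \<le> g c - h * (g c + e)"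
  proof -
    have "\<psi> c * (1 - h) \<le> g c * (1 - h)" using gc h1 by (intro mult_right_mono) auto
    thus ?thesis by (simp add: e_def algebra_simps)
  qed
  moreover have "\<psi> (c + h) \<le> \<psi> c * (1 - h * (1 + \<eta>/2))"
  proof -
    have "\<psi> (c + h) = \<psi> c * exp (- ((1 + \<eta>) * h))"
      by (simp add: \<psi>_def algebra_simps exp_add[symmetric])
    also have "\<dots> \<le> \<psi> c * (1 - h * (1 + \<eta>/2))"
      using exp_aux[OF \<eta> less_imp_le[OF h0] h3] psic by (intro mult_left_mono) auto
    finally show ?thesis .
  qed
  ultimately have "\<psi> (c + h) \<le> g (c + h)" by linarith
  moreover have "c + h = s" by (simp add: h_def)
  ultimately show False using sS by (simp add: S_def)
qed

lemma dini_exp: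
  fixes g :: "real \<Rightarrow> real"
  assumes cont: "continuous_on {0..T} g" and g0: "0 < g 0"
    and dini: "\<And>t e. 0 \<le> t \<Longrightarrow> t < T \<Longrightarrow> 0 < e \<Longrightarrow>
        \<exists>d>0. \<forall>h. 0 < h \<longrightarrow> h < d \<longrightarrow> t + h \<le> T \<longrightarrow> g t - h * (g t + e) \<le> g (t + h)"
    and t: "t \<in> {0..T}"
  shows "g 0 * exp (- t) \<le> g t"
proof -
  have "((\<lambda>\<eta>. g 0 * exp (- ((1 + \<eta>) * t))) \<longlongrightarrow> g 0 * exp (- ((1 + 0) * t))) (at_right 0)"
    by (intro tendsto_intros)
  moreover have "((\<lambda>\<eta>. g t) \<longlongrightarrow> g t) (at_right 0)" by simp
  moreover have "eventually (\<lambda>\<eta>. g 0 * exp (- ((1 + \<eta>) * t)) \<le> g t) (at_right (0::real))"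
    using dini_exp_eta[OF cont g0 _ dini] t by (auto simp: eventually_at_right_less intro: eventually_at_rightI[where b=1])
  ultimately have "g 0 * exp (- ((1 + 0) * t)) \<le> g t"
    by (intro tendsto_le[OF trivial_limit_at_right_real]) auto
  thus ?thesis by simp
qed

locale clsys0 = clsys +
  fixes x0 :: 'a
  assumes x0: "0 \<notin> A x0"
begin

definition R where "R = norm (x0 - zs)"
definition Pj where "Pj y = zs + (min 1 (R / norm (y - zs))) *\<^sub>R (y - zs)"
definition G where "G M y = resolvent A (Lc M (Pj y)) (Pj y) - Pj y"
definition KL where "KL M = M^2 * (real (p-1) * R^(p-2)) / \<theta>"
definition m0 where "m0 M = min M (\<theta> / R^(p-1))"
definition LG where "LG M = 2 + KL M * R / m0 M"

lemma R_pos: "0 < R"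
proof -
  have "x0 \<noteq> zs" using x0 zs by auto
  thus ?thesis by (simp add: R_def)
qed

lemma Pj_eq: "Pj y - zs = (min 1 (R / norm (y - zs))) *\<^sub>R (y - zs)"
  by (simp add: Pj_def)

lemma Pj_in: "norm (Pj y - zs) \<le> R"
proof (cases "y = zs")
  case True thus ?thesis using R_pos by (simp add: Pj_def)
next
  case False
  hence n: "0 < norm (y - zs)" by simp
  have "norm (Pj y - zs) = min 1 (R / norm (y - zs)) * norm (y - zs)"
    unfolding Pj_eq using R_pos by simp
  also have "\<dots> \<le> (R / norm (y - zs)) * norm (y - zs)" using n by (intro mult_right_mono) auto
  also have "\<dots> = R" using n by simp
  finally show ?thesis .
qed

lemma Pj_id: "norm (y - zs) \<le> R \<Longrightarrow> Pj y = y"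
proof (cases "y = zs")
  case True thus ?thesis by (simp add: Pj_def)
next
  case False
  assume le: "norm (y - zs) \<le> R"
  hence "1 \<le> R / norm (y - zs)" using False by simp
  hence "min 1 (R / norm (y - zs)) = 1" by simp
  thus ?thesis by (simp add: Pj_def)
qed

lemma Pj_vi:
  assumes c: "norm (c - zs) \<le> R"
  shows "inner (y - Pj y) (c - Pj y) \<le> 0"
proof (cases "norm (y - zs) \<le> R")
  case True thus ?thesis by (simp add: Pj_id)
next
  case False
  define n where "n = norm (y - zs)"
  define s where "s = R / n"
  have n: "R < n" using False by (simp add: n_def)
  have npos: "0 < n" using n R_pos by simp
  have s1': "s < 1" using n npos by (simp add: s_def field_simps)
  hence s1: "s \<le> 1" by simp
  have s0: "0 < s" using R_pos npos by (simp add: s_def)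
  have s: "min 1 (R / norm (y - zs)) = s" using s1' by (simp add: s_def n_def[symmetric])
  have py: "Pj y = zs + s *\<^sub>R (y - zs)" using s by (simp add: Pj_def)
  have e1: "y - Pj y = (1 - s) *\<^sub>R (y - zs)" by (simp add: py algebra_simps)
  have e2: "c - Pj y = (c - zs) - s *\<^sub>R (y - zs)" by (simp add: py algebra_simps)
  have ia: "inner ((1-s) *\<^sub>R a) (cc - s *\<^sub>R a) = (1-s) * (inner a cc - s * (norm a * norm a))" for a cc :: 'a
  proof -
    have "norm a * norm a = inner a a" by (simp add: power2_norm_eq_inner[symmetric] power2_eq_square)
    thus ?thesis by (simp add: inner_diff_right algebra_simps)
  qed
  have "inner (y - Pj y) (c - Pj y) = (1 - s) * (inner (y - zs) (c - zs) - s * (n * n))"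
    unfolding e1 e2 ia n_def ..
  also have "\<dots> \<le> 0"
  proof -
    have "inner (y - zs) (c - zs) \<le> n * R"
      using norm_cauchy_schwarz[of "y - zs" "c - zs"] c n_def
      by (meson mult_left_mono norm_ge_zero order_trans)
    moreover have "s * (n * n) = n * R" using n R_pos by (simp add: s_def)
    ultimately have "inner (y - zs) (c - zs) - s * (n * n) \<le> 0" by linarith
    thus ?thesis using s1 by (intro mult_nonneg_nonpos) auto
  qed
  finally show ?thesis .
qed

lemma Pj_nonexp: "norm (Pj y - Pj w) \<le> norm (y - w)"
proof -
  have a: "inner (y - Pj y) (Pj w - Pj y) \<le> 0" by (rule Pj_vi[OF Pj_in])
  have b: "inner (w - Pj w) (Pj y - Pj w) \<le> 0" by (rule Pj_vi[OF Pj_in])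
  have "inner (Pj y - Pj w) (Pj y - Pj w) \<le> inner (y - w) (Pj y - Pj w)"
  proof -
    have "inner (y - Pj y) (Pj w - Pj y) + inner (w - Pj w) (Pj y - Pj w)
        = inner (Pj y - Pj w) (Pj y - Pj w) - inner (y - w) (Pj y - Pj w)"
      by (simp add: inner_diff_left inner_diff_right inner_commute algebra_simps)
    thus ?thesis using a b by linarith
  qed
  also have "\<dots> \<le> norm (y - w) * norm (Pj y - Pj w)" by (rule norm_cauchy_schwarz)
  finally have "norm (Pj y - Pj w) * norm (Pj y - Pj w) \<le> norm (y - w) * norm (Pj y - Pj w)"
    by (simp add: power2_norm_eq_inner[symmetric] power2_eq_square)
  thus ?thesis by (cases "norm (Pj y - Pj w) = 0") (auto simp: mult_le_cancel_right)
qed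

lemma Pj_dir:
  assumes "inner (Pj y - zs) v \<le> 0"
  shows "inner (y - zs) v \<le> 0"
proof (cases "y = zs")
  case True thus ?thesis by simp
next
  case False
  define s where "s = min 1 (R / norm (y - zs))"
  have s0: "0 < s" using False R_pos by (simp add: s_def)
  have "s * inner (y - zs) v \<le> 0" using assms unfolding Pj_eq by (simp add: s_def)
  thus ?thesis using s0 by (simp add: mult_le_0_iff)
qed

lemma res_inner_nonpos:
  assumes l: "0 < l"
  shows "inner (x - zs) (resolvent A l x - x) \<le> 0"
proof -
  let ?J = "resolvent A l x"
  have "0 \<le> inner (?J - zs) ((1/l) *\<^sub>R (x - ?J) - 0)"
    by (rule mono_A[OF mm res_in[OF mm l] zs])
  hence "0 \<le> (1/l) * inner (?J - zs) (x - ?J)" by simp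
  hence m: "0 \<le> inner (?J - zs) (x - ?J)" using l by (simp add: zero_le_divide_iff)
  have "inner (x - zs) (?J - x) = - inner (?J - zs) (x - ?J) - inner (x - ?J) (x - ?J)"
    by (simp add: inner_diff_left inner_diff_right inner_commute algebra_simps)
  thus ?thesis using m inner_ge_zero[of "x - ?J"] by linarith
qed

lemma G_inner: "0 < M \<Longrightarrow> inner (y - zs) (G M y) \<le> 0"
  unfolding G_def by (rule Pj_dir, rule res_inner_nonpos, rule Lc_pos)

lemma m0_pos: "0 < M \<Longrightarrow> 0 < m0 M"
  using th R_pos by (simp add: m0_def)

lemma G_lip:
  assumes M: "0 < M"
  shows "norm (G M y - G M w) \<le> LG M * norm (y - w)"
proof -
  define a where "a = Pj y"
  define b where "b = Pj w"
  define l where "l = Lc M a"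
  define m where "m = Lc M b"
  have ab: "norm (a - b) \<le> norm (y - w)" by (simp add: a_def b_def Pj_nonexp)
  have ain: "norm (a - zs) \<le> R" and bin: "norm (b - zs) \<le> R" by (simp_all add: a_def b_def Pj_in)
  have l0: "0 < l" and m0': "0 < m" using Lc_pos M by (auto simp: l_def m_def)
  have mlow: "m0 M \<le> m" unfolding m0_def m_def by (rule Lc_lower[OF M R_pos bin])
  have K0: "0 \<le> KL M" using M th R_pos by (simp add: KL_def)
  have lm: "\<bar>l - m\<bar> \<le> KL M * norm (a - b)"
    unfolding l_def m_def KL_def by (rule Lc_lip[OF M R_pos ain bin])
  have "norm (resolvent A l a - resolvent A m b)
      \<le> norm (resolvent A l a - resolvent A l b) + norm (resolvent A l b - resolvent A m b)"
    using norm_triangle_ineq[of "resolvent A l a - resolvent A l b" "resolvent A l b - resolvent A m b"] by simp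
  also have "\<dots> \<le> norm (a - b) + \<bar>m - l\<bar> / m * u m b"
    using res_nonexp(1)[OF mm l0, of a b] res_lam_lip[OF mm l0 m0', of b]
    by (intro add_mono) (auto simp: u_def)
  also have "\<bar>m - l\<bar> / m * u m b \<le> (KL M * norm (a - b)) / m0 M * R"
  proof (intro mult_mono frac_le)
    show "\<bar>m - l\<bar> \<le> KL M * norm (a - b)" using lm by (simp add: abs_minus_commute)
    show "0 \<le> KL M * norm (a - b)" using K0 by simp
    show "0 < m0 M" by (rule m0_pos[OF M])
    show "m0 M \<le> m" by (rule mlow)
    show "u m b \<le> R" using u_le[OF m0'] bin by (rule order_trans)
    show "0 \<le> KL M * norm (a - b) / m0 M" using K0 m0_pos[OF M] by simp
  qed (simp_all add: u_nonneg)
  finally have 1: "norm (resolvent A l a - resolvent A m b) \<le> norm (a - b) + KL M * R / m0 M * norm (a - b)"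
    by (simp add: field_simps)
  have "norm (G M y - G M w) \<le> norm (resolvent A l a - resolvent A m b) + norm (a - b)"
    unfolding G_def l_def[symmetric] m_def[symmetric] a_def[symmetric] b_def[symmetric]
    using norm_triangle_ineq4[of "resolvent A l a - resolvent A m b" "a - b"] by (simp add: algebra_simps)
  also have "\<dots> \<le> (2 + KL M * R / m0 M) * norm (a - b)" using 1 by (simp add: algebra_simps)
  also have "\<dots> \<le> (2 + KL M * R / m0 M) * norm (y - w)"
    using ab K0 R_pos m0_pos[OF M] by (intro mult_left_mono) auto
  finally show ?thesis by (simp add: LG_def)
qed

lemma LG_pos: "0 < M \<Longrightarrow> 0 < LG M"
  using m0_pos[of M] R_pos th by (simp add: LG_def KL_def add_pos_nonneg)

end

context clsys0
begin

lemma lam0_ex: "\<exists>l. 0 < l \<and> phi l x0 = \<theta>"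
proof -
  have u1: "0 < u 1 x0" using u_zero_iff[of 1 x0] x0 u_nonneg[of 1 x0] by simp
  define c1 where "c1 = u 1 x0 ^ (p-1)"
  have c1: "0 < c1" using u1 by (simp add: c1_def)
  define M where "M = max 1 (\<theta> / c1) + 1"
  have M1: "1 \<le> M" and M0: "0 < M" by (auto simp: M_def)
  have "M * c1 \<le> phi M x0"
    unfolding phi_def c1_def by (intro mult_left_mono power_mono u_mono M1 u_nonneg) (use M0 in auto)
  moreover have "\<theta> < M * c1"
  proof -
    have "\<theta> / c1 < M" by (simp add: M_def)
    thus ?thesis using c1 by (simp add: field_simps)
  qed
  ultimately have "\<theta> < phi M x0" by linarith
  from root_ex[OF M0 this] show ?thesis by blast
qed

definition lam0 where "lam0 = (THE l. 0 < l \<and> phi l x0 = \<theta>)"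

lemma lam0_prop: "0 < lam0 \<and> phi lam0 x0 = \<theta>"
proof -
  obtain l where l: "0 < l" "phi l x0 = \<theta>" using lam0_ex by blast
  have "lam0 = l" unfolding lam0_def
    by (rule the_equality) (use l phi_root_uniq in auto)
  thus ?thesis using l by auto
qed

lemmas lam0 = lam0_prop[THEN conjunct1] lam0_prop[THEN conjunct2]

lemma lam0_uniq: "0 < l \<Longrightarrow> phi l x0 = \<theta> \<Longrightarrow> l = lam0"
  using phi_root_uniq lam0 by blast

definition u0 where "u0 = u lam0 x0"

lemma u0_pos: "0 < u0"
  using u_zero_iff[OF lam0(1), of x0] x0 u_nonneg[of lam0 x0] by (simp add: u0_def)

definition Bd where "Bd T = \<theta> / (u0 * exp (- T)) ^ (p-1)"
definition MM where "MM T = Bd T + lam0 + 1"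

lemma Bd_pos: "0 < Bd T" using th u0_pos by (simp add: Bd_def)
lemma MM_pos: "0 < MM T" unfolding MM_def using Bd_pos[of T] lam0(1) by linarith
lemma MM_gt: "Bd T < MM T" "lam0 < MM T" using Bd_pos[of T] lam0(1) by (auto simp: MM_def)

definition sol where
  "sol T x lam \<longleftrightarrow> x 0 = x0 \<and> (\<forall>t\<in>{0..T}.
      (x has_vector_derivative (resolvent A (lam t) (x t) - x t)) (at t within {0..}) \<and>
      0 < lam t \<and> phi (lam t) (x t) = \<theta>)"

lemma ball_lemma:
  assumes x00: "x 0 = x0"
    and d: "\<And>s. s \<in> {0..T} \<Longrightarrow> (x has_vector_derivative V s) (at s within {0..})"
    and neg: "\<And>s. s \<in> {0..T} \<Longrightarrow> inner (x s - zs) (V s) \<le> 0"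
    and t: "t \<in> {0..T}"
  shows "norm (x t - zs) \<le> R"
proof -
  define f where "f s = inner (x s - zs) (x s - zs)" for s
  have "f t \<le> f 0"
  proof (rule deriv_nonpos_dec[where f=f and a=0 and b=t and f' = "\<lambda>s. 2 * inner (x s - zs) (V s)"])
    show "0 \<le> t" using t by simp
    fix s assume s: "s \<in> {0..t}"
    hence sT: "s \<in> {0..T}" using t by auto
    have "(x has_vector_derivative V s) (at s within {0..t})"
      by (rule has_vector_derivative_within_subset[OF d[OF sT]]) auto
    thus "(f has_field_derivative 2 * inner (x s - zs) (V s)) (at s within {0..t})"
      unfolding f_def[abs_def] by (rule deriv_sq)
    show "2 * inner (x s - zs) (V s) \<le> 0" using neg[OF sT] by simp
  qed
  hence "(norm (x t - zs))^2 \<le> R^2" by (simp add: f_def x00 R_def power2_norm_eq_inner)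
  thus ?thesis by (rule power2_le_imp_le) (use R_pos in simp)
qed

lemma lower_bound:
  assumes d: "\<And>t. t \<in> {0..T} \<Longrightarrow> (x has_vector_derivative (resolvent A (lam t) (x t) - x t)) (at t within {0..})"
    and pos: "\<And>t. t \<in> {0..T} \<Longrightarrow> 0 < lam t"
    and pc: "\<And>s t. s \<in> {0..T} \<Longrightarrow> t \<in> {0..T} \<Longrightarrow> lam s < lam t \<Longrightarrow> phi (lam t) (x t) \<le> phi (lam s) (x s)"
    and g0: "0 < u (lam 0) (x 0)"
    and t: "t \<in> {0..T}"
  shows "u (lam 0) (x 0) * exp (- t) \<le> u (lam t) (x t)"
proof -
  define g where "g s = u (lam s) (x s)" for s
  have key: "g t - norm (x s - x t) \<le> g s" if "s \<in> {0..T}" "t \<in> {0..T}" for s t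
    unfolding g_def by (rule Ukey[OF pos[OF that(2)] pos[OF that(1)] pc[OF that]])
  have xc: "continuous_on {0..T} x"
    unfolding continuous_on_eq_continuous_within
  proof
    fix s assume s: "s \<in> {0..T}"
    have "continuous (at s within {0..}) x" by (rule has_vector_derivative_continuous[OF d[OF s]])
    thus "continuous (at s within {0..T}) x" by (rule continuous_within_subset) auto
  qed
  have gc: "continuous_on {0..T} g"
    unfolding continuous_on_iff
  proof (intro ballI allI impI)
    fix s e :: real assume s: "s \<in> {0..T}" and e: "0 < e"
    obtain d where d: "d > 0" "\<forall>s'\<in>{0..T}. dist s' s < d \<longrightarrow> dist (x s') (x s) < e"
      using xc s e unfolding continuous_on_iff by blast
    show "\<exists>d>0. \<forall>s'\<in>{0..T}. dist s' s < d \<longrightarrow> dist (g s') (g s) < e"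
    proof (intro exI[of _ d] conjI ballI impI d(1))
      fix s' assume s': "s' \<in> {0..T}" "dist s' s < d"
      have "g s - norm (x s' - x s) \<le> g s'" by (rule key[OF s'(1) s])
      moreover have "g s' - norm (x s - x s') \<le> g s" by (rule key[OF s s'(1)])
      moreover have "norm (x s' - x s) < e" using d(2) s' by (simp add: dist_norm)
      ultimately show "dist (g s') (g s) < e" by (simp add: dist_real_def norm_minus_commute abs_less_iff)
    qed
  qed
  have "g 0 * exp (- t) \<le> g t"
  proof (rule dini_exp[OF gc])
    show "0 < g 0" using g0 by (simp add: g_def)
    show "t \<in> {0..T}" by (rule t)
    fix s e :: real assume s: "0 \<le> s" "s < T" and e: "0 < e"
    have sT: "s \<in> {0..T}" using s by simp
    obtain d where d: "d > 0" "\<forall>h. 0 < h \<longrightarrow> h < d \<longrightarrow>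
        norm (x (s + h) - x s) \<le> h * (norm (resolvent A (lam s) (x s) - x s) + e)"
      using deriv_local[OF d[OF sT] s(1) e] by blast
    show "\<exists>d>0. \<forall>h. 0 < h \<longrightarrow> h < d \<longrightarrow> s + h \<le> T \<longrightarrow> g s - h * (g s + e) \<le> g (s + h)"
    proof (intro exI[of _ d] conjI allI impI d(1))
      fix h assume h: "0 < h" "h < d" "s + h \<le> T"
      have "norm (x (s + h) - x s) \<le> h * (g s + e)"
        using d(2) h by (simp add: g_def u_def norm_minus_commute)
      moreover have "g s - norm (x (s + h) - x s) \<le> g (s + h)"
        by (rule key) (use sT h in auto)
      ultimately show "g s - h * (g s + e) \<le> g (s + h)" by linarith
    qed
  qed
  thus ?thesis by (simp add: g_def)
qed

lemma sol_props:
  assumes S: "sol T x lam" and t: "t \<in> {0..T}"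
  shows "norm (x t - zs) \<le> R" and "lam t = Lc (MM T) (x t)" and "u0 * exp (- t) \<le> u (lam t) (x t)"
proof -
  have x00: "x 0 = x0" using S by (simp add: sol_def)
  have d: "\<And>s. s \<in> {0..T} \<Longrightarrow> (x has_vector_derivative (resolvent A (lam s) (x s) - x s)) (at s within {0..})"
    and pos: "\<And>s. s \<in> {0..T} \<Longrightarrow> 0 < lam s"
    and ph: "\<And>s. s \<in> {0..T} \<Longrightarrow> phi (lam s) (x s) = \<theta>"
    using S by (auto simp: sol_def)
  have neg: "\<And>s. s \<in> {0..T} \<Longrightarrow> inner (x s - zs) (resolvent A (lam s) (x s) - x s) \<le> 0"
    using res_inner_nonpos pos by blast
  show "norm (x t - zs) \<le> R" by (rule ball_lemma[OF x00 d neg t])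
  have T0: "0 \<le> T" using t by simp
  have T00: "0 \<in> {0..T}" using T0 by simp
  have l0: "lam 0 = lam0" using lam0_uniq[OF pos[OF T00]] ph[OF T00] x00 by simp
  have lb: "u (lam 0) (x 0) * exp (- t) \<le> u (lam t) (x t)"
    by (rule lower_bound[OF d pos _ _ t]) (use ph x00 l0 u0_pos in \<open>auto simp: u0_def\<close>)
  thus lb': "u0 * exp (- t) \<le> u (lam t) (x t)" using x00 l0 by (simp add: u0_def)
  have "lam t < MM T"
  proof -
    have pe: "0 < u0 * exp (- T)" using u0_pos by simp
    have "u0 * exp (- T) \<le> u0 * exp (- t)" using t u0_pos by (intro mult_left_mono) auto
    hence ule: "u0 * exp (- T) \<le> u (lam t) (x t)" using lb' by linarith
    have "lam t * (u0 * exp (- T)) ^ (p-1) \<le> lam t * u (lam t) (x t) ^ (p-1)"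
      using pos[OF t] pe ule by (intro mult_left_mono power_mono) auto
    also have "\<dots> = \<theta>" using ph[OF t] by (simp add: phi_def)
    finally have hh: "lam t * (u0 * exp (- T)) ^ (p-1) \<le> \<theta>" .
    have cpos: "0 < (u0 * exp (- T)) ^ (p-1)" using pe by simp
    have "lam t \<le> Bd T" unfolding Bd_def by (simp only: pos_le_divide_eq[OF cpos]) (rule hh)
    thus ?thesis using MM_gt(1)[of T] by linarith
  qed
  thus "lam t = Lc (MM T) (x t)" using Lc_eq[OF pos[OF t] _ ph[OF t]] by simp
qed

lemma sol_G:
  assumes S: "sol T x lam" and t: "t \<in> {0..T}"
  shows "resolvent A (lam t) (x t) - x t = G (MM T) (x t)"
  using sol_props[OF S t] Pj_id by (simp add: G_def)

lemma sol_unique: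
  assumes S1: "sol T x lam" and S2: "sol T y mu" and t: "t \<in> {0..T}"
  shows "x t = y t \<and> lam t = mu t"
proof -
  define M where "M = MM T"
  define L where "L = LG M"
  have L0: "0 < L" using LG_pos MM_pos by (simp add: L_def M_def)
  have dx: "(x has_vector_derivative G M (x s)) (at s within {0..})" if "s \<in> {0..T}" for s
  proof -
    have "(x has_vector_derivative (resolvent A (lam s) (x s) - x s)) (at s within {0..})"
      using S1 that by (simp add: sol_def)
    from this[unfolded sol_G[OF S1 that]] show ?thesis by (simp add: M_def)
  qed
  have dy: "(y has_vector_derivative G M (y s)) (at s within {0..})" if "s \<in> {0..T}" for s
  proof -
    have "(y has_vector_derivative (resolvent A (mu s) (y s) - y s)) (at s within {0..})"
      using S2 that by (simp add: sol_def)
    from this[unfolded sol_G[OF S2 that]] show ?thesis by (simp add: M_def)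
  qed
  define e where "e s = inner ((x s - y s) - 0) ((x s - y s) - 0)" for s
  define k where "k s = exp (- (2 * L * s)) * e s" for s
  have "k t \<le> k 0"
  proof (rule deriv_nonpos_dec[where f=k and a=0 and b=t and f'="\<lambda>s. exp (- (2 * L * s)) * (2 * inner ((x s - y s) - 0) (G M (x s) - G M (y s)))
                                       + (- (2 * L)) * exp (- (2 * L * s)) * e s"])
    show "0 \<le> t" using t by simp
    fix s assume s: "s \<in> {0..t}"
    hence sT: "s \<in> {0..T}" using t by auto
    have dx': "(x has_vector_derivative G M (x s)) (at s within {0..t})"
      by (rule has_vector_derivative_within_subset[OF dx[OF sT]]) auto
    have dy': "(y has_vector_derivative G M (y s)) (at s within {0..t})"
      by (rule has_vector_derivative_within_subset[OF dy[OF sT]]) auto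
    have dxy: "((\<lambda>s. x s - y s) has_vector_derivative (G M (x s) - G M (y s))) (at s within {0..t})"
      by (rule has_vector_derivative_diff[OF dx' dy'])
    have de: "(e has_field_derivative 2 * inner ((x s - y s) - 0) (G M (x s) - G M (y s))) (at s within {0..t})"
      unfolding e_def[abs_def] using deriv_sq[OF dxy, of 0] by simp
    have dexp: "((\<lambda>s. exp (- (2 * L * s))) has_field_derivative (- (2 * L)) * exp (- (2 * L * s))) (at s within {0..t})"
      by (auto intro!: derivative_eq_intros)
    show "(k has_field_derivative exp (- (2 * L * s)) * (2 * inner ((x s - y s) - 0) (G M (x s) - G M (y s)))
                                       + (- (2 * L)) * exp (- (2 * L * s)) * e s) (at s within {0..t})"
      unfolding k_def[abs_def] using DERIV_mult[OF dexp de] by (simp add: algebra_simps)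
    have "inner (x s - y s) (G M (x s) - G M (y s)) \<le> norm (x s - y s) * norm (G M (x s) - G M (y s))"
      by (rule norm_cauchy_schwarz)
    also have "\<dots> \<le> norm (x s - y s) * (L * norm (x s - y s))"
      using G_lip[OF MM_pos] by (intro mult_left_mono) (auto simp: L_def M_def)
    also have "\<dots> = L * e s" by (simp add: e_def power2_norm_eq_inner[symmetric] power2_eq_square)
    finally have "inner (x s - y s) (G M (x s) - G M (y s)) \<le> L * e s" .
    hence "exp (- (2 * L * s)) * (2 * inner (x s - y s) (G M (x s) - G M (y s))) \<le> exp (- (2 * L * s)) * (2 * (L * e s))"
      by (intro mult_left_mono) auto
    thus "exp (- (2 * L * s)) * (2 * inner ((x s - y s) - 0) (G M (x s) - G M (y s)))
                                       + (- (2 * L)) * exp (- (2 * L * s)) * e s \<le> 0"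
      by (simp add: algebra_simps)
  qed
  moreover have "x 0 = y 0" using S1 S2 by (simp add: sol_def)
  ultimately have k: "exp (- (2 * L * t)) * e t \<le> 0" by (simp add: k_def e_def)
  have "e t \<le> 0"
  proof (rule ccontr)
    assume "\<not> e t \<le> 0"
    hence "0 < exp (- (2 * L * t)) * e t" by simp
    thus False using k by simp
  qed
  hence "x t = y t" using inner_ge_zero[of "x t - y t"] by (simp add: e_def)
  moreover have "lam t = mu t" using sol_props(2)[OF S1 t] sol_props(2)[OF S2 t] calculation by simp
  ultimately show ?thesis by simp
qed

end

context clsys0
begin

lemma sol_mono: "sol T x lam \<Longrightarrow> T' \<le> T \<Longrightarrow> sol T' x lam"
  unfolding sol_def by auto

lemma lip_from_deriv:
  fixes X :: "real \<Rightarrow> 'a"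
  assumes d: "\<And>t. 0 \<le> t \<Longrightarrow> (X has_vector_derivative V t) (at t within {0..})"
    and b: "\<And>t. 0 \<le> t \<Longrightarrow> norm (V t) \<le> B"
    and s: "0 \<le> s" and t: "0 \<le> t"
  shows "norm (X s - X t) \<le> B * norm (s - t)"
proof (rule differentiable_bound[where S="{0..}" and f'="\<lambda>t h. h *\<^sub>R V t"])
  show "convex {0::real..}" by (rule convex_real_interval)
  fix x :: real assume x: "x \<in> {0..}"
  show "(X has_derivative (\<lambda>h. h *\<^sub>R V x)) (at x within {0..})"
    using d[of x] x by (simp add: has_vector_derivative_def)
  have "onorm (\<lambda>h::real. h *\<^sub>R V x) = onorm (\<lambda>h::real. h) * norm (V x)"
    by (rule onorm_scaleR_left[OF bounded_linear_ident])
  also have "\<dots> = norm (V x)" by (simp add: onorm_id)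
  finally show "onorm (\<lambda>h. h *\<^sub>R V x) \<le> B" using b[of x] x by simp
qed (use s t in auto)

lemma capped_ex:
  assumes T0: "0 \<le> T"
  shows "\<exists>X. (\<forall>t\<ge>0. (X has_vector_derivative G (MM T) (X t)) (at t within {0..})) \<and>
             (\<forall>t\<ge>0. norm (X t - zs) \<le> R) \<and> sol T X (\<lambda>t. Lc (MM T) (X t))"
proof -
  define M where "M = MM T"
  have M0: "0 < M" by (simp add: M_def MM_pos)
  obtain X where X0: "X 0 = x0" and Xd: "\<forall>t\<ge>0. (X has_vector_derivative G M (X t)) (at t within {0..})"
    using picard[OF G_lip[OF M0] LG_pos[OF M0]] by blast
  have ball: "norm (X t - zs) \<le> R" if t: "0 \<le> t" for t
  proof (rule ball_lemma[where x=X and T=t and V="\<lambda>s. G M (X s)"])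
    fix s assume "s \<in> {0..t}"
    thus "(X has_vector_derivative G M (X s)) (at s within {0..})" using Xd by auto
    show "inner (X s - zs) (G M (X s)) \<le> 0" by (rule G_inner[OF M0])
  qed (use t X0 in auto)
  define lamX where "lamX s = Lc M (X s)" for s
  have GX: "G M (X s) = resolvent A (lamX s) (X s) - X s" if "0 \<le> s" for s
    using Pj_id[OF ball[OF that]] by (simp add: G_def lamX_def)
  have lpos: "0 < lamX s" for s by (simp add: lamX_def Lc_pos[OF M0])
  have l00: "lamX 0 = lam0"
    unfolding lamX_def X0 M_def by (rule Lc_eq[OF lam0(1) MM_gt(2) lam0(2)])
  have lb: "u (lamX 0) (X 0) * exp (- t) \<le> u (lamX t) (X t)" if t: "t \<in> {0..T}" for t
  proof (rule lower_bound[where T=T and x=X and lam=lamX])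
    fix s assume s: "s \<in> {0..T}"
    show "(X has_vector_derivative resolvent A (lamX s) (X s) - X s) (at s within {0..})"
      using Xd s GX[of s] by auto
    show "0 < lamX s" by (rule lpos)
  next
    fix s t assume st: "s \<in> {0..T}" "t \<in> {0..T}" "lamX s < lamX t"
    have "lamX s < M" using st(3) Lc_le[OF M0, of "X t"] by (simp add: lamX_def)
    hence "phi (lamX s) (X s) = \<theta>" using Lc_lt[OF M0] by (simp add: lamX_def)
    moreover have "phi (lamX t) (X t) \<le> \<theta>" using Lc_phi_le[OF M0] by (simp add: lamX_def)
    ultimately show "phi (lamX t) (X t) \<le> phi (lamX s) (X s)" by simp
  next
    show "0 < u (lamX 0) (X 0)" using u0_pos by (simp add: l00 X0 u0_def)
  qed (rule t)
  have ltM: "lamX t < M" if t: "t \<in> {0..T}" for t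
  proof (rule ccontr)
    assume "\<not> lamX t < M"
    hence eqM: "lamX t = M" using Lc_le[OF M0, of "X t"] by (simp add: lamX_def)
    have ph: "phi M (X t) \<le> \<theta>" using Lc_phi_le[OF M0, of "X t"] eqM by (simp add: lamX_def)
    have pe: "0 < u0 * exp (- T)" using u0_pos by simp
    have "u0 * exp (- T) \<le> u0 * exp (- t)" using t u0_pos by (intro mult_left_mono) auto
    also have "\<dots> \<le> u M (X t)" using lb[OF t] eqM by (simp add: l00 X0 u0_def)
    finally have ule: "u0 * exp (- T) \<le> u M (X t)" .
    have "M * (u0 * exp (- T)) ^ (p-1) \<le> M * u M (X t) ^ (p-1)"
      using M0 pe ule by (intro mult_left_mono power_mono) auto
    also have "\<dots> \<le> \<theta>" using ph by (simp add: phi_def)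
    finally have hh: "M * (u0 * exp (- T)) ^ (p-1) \<le> \<theta>" .
    have cpos: "0 < (u0 * exp (- T)) ^ (p-1)" using pe by simp
    have "M \<le> Bd T" unfolding Bd_def by (simp only: pos_le_divide_eq[OF cpos]) (rule hh)
    thus False using MM_gt(1)[of T] by (simp add: M_def)
  qed
  have "sol T X lamX"
    unfolding sol_def
  proof (intro conjI ballI X0)
    fix t assume t: "t \<in> {0..T}"
    show "(X has_vector_derivative resolvent A (lamX t) (X t) - X t) (at t within {0..})"
      using Xd t GX[of t] by auto
    show "0 < lamX t" by (rule lpos)
    show "phi (lamX t) (X t) = \<theta>" using Lc_lt[OF M0 ltM[OF t, unfolded lamX_def]] by (simp add: lamX_def)
  qed
  moreover have "lamX = (\<lambda>t. Lc (MM T) (X t))" by (simp add: lamX_def[abs_def] M_def)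
  ultimately show ?thesis using Xd ball by (intro exI[of _ X]) (auto simp: M_def)
qed

lemma cl_sol:
  assumes "is_cl_solution A \<theta> p x0 x lam"
  shows "sol T x lam"
proof -
  from assms obtain x' where d: "\<forall>t\<ge>0. (x has_vector_derivative x' t) (at t within {0..})"
    and e: "\<forall>t\<ge>0. x' t + x t - resolvent A (lam t) (x t) = 0"
    and pos: "\<forall>t\<ge>0. lam t > 0"
    and ph: "\<forall>t\<ge>0. lam t * norm (resolvent A (lam t) (x t) - x t) ^ (p - 1) = \<theta>"
    and x00: "x 0 = x0"
    unfolding is_cl_solution_def by blast
  have "x' t = resolvent A (lam t) (x t) - x t" if "0 \<le> t" for t
    using e that by (simp add: algebra_simps eq_diff_eq)
  thus ?thesis
    unfolding sol_def using d pos ph x00 by (auto simp: phi_def u_def norm_minus_commute)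
qed

lemma global_ex: "\<exists>x lam. is_cl_solution A \<theta> p x0 x lam"
proof -
  have "\<forall>n::nat. \<exists>X. (\<forall>t\<ge>0. (X has_vector_derivative G (MM (real n)) (X t)) (at t within {0..})) \<and>
             (\<forall>t\<ge>0. norm (X t - zs) \<le> R) \<and> sol (real n) X (\<lambda>t. Lc (MM (real n)) (X t))"
    using capped_ex by simp
  then obtain Xs where Xd: "\<And>n t. 0 \<le> t \<Longrightarrow> (Xs n has_vector_derivative G (MM (real n)) (Xs n t)) (at t within {0..})"
    and Xb: "\<And>n t. 0 \<le> t \<Longrightarrow> norm (Xs n t - zs) \<le> R"
    and Xs: "\<And>n. sol (real n) (Xs n) (\<lambda>t. Lc (MM (real n)) (Xs n t))"
    by metis
  define N where "N t = nat \<lceil>t\<rceil> + 1" for t :: real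
  have Ngt: "t < real (N t)" if "0 \<le> t" for t
    using that unfolding N_def by linarith
  define xg where "xg t = Xs (N t) t" for t
  define lg where "lg t = Lc (MM (real (N t))) (xg t)" for t
  have agree: "Xs n s = xg s \<and> Lc (MM (real n)) (Xs n s) = lg s" if s: "0 \<le> s" "s \<le> real n" for n s
  proof -
    define T' where "T' = min (real n) (real (N s))"
    have S1: "sol T' (Xs n) (\<lambda>t. Lc (MM (real n)) (Xs n t))"
      by (rule sol_mono[OF Xs]) (simp add: T'_def)
    have S2: "sol T' (Xs (N s)) (\<lambda>t. Lc (MM (real (N s))) (Xs (N s) t))"
      by (rule sol_mono[OF Xs]) (simp add: T'_def)
    have "s \<in> {0..T'}" using s Ngt[OF s(1)] by (simp add: T'_def)
    from sol_unique[OF S1 S2 this] have a: "Xs n s = Xs (N s) s"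
      and b: "Lc (MM (real n)) (Xs n s) = Lc (MM (real (N s))) (Xs (N s) s)" by auto
    show ?thesis
    proof
      show "Xs n s = xg s" unfolding xg_def by (rule a)
      show "Lc (MM (real n)) (Xs n s) = lg s" unfolding lg_def xg_def by (rule b)
    qed
  qed
  define x' where "x' t = resolvent A (lg t) (xg t) - xg t" for t
  have x'G: "x' s = G (MM (real n)) (Xs n s)" if s: "0 \<le> s" "s \<le> real n" for n s
  proof -
    have "G (MM (real n)) (Xs n s) = resolvent A (Lc (MM (real n)) (Xs n s)) (Xs n s) - Xs n s"
      using Pj_id[OF Xb[OF s(1)]] by (simp add: G_def)
    have a: "Xs n s = xg s" and b: "Lc (MM (real n)) (Xs n s) = lg s" using agree[OF s] by auto
    have b': "Lc (MM (real n)) (xg s) = lg s" using b unfolding a .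
    show ?thesis unfolding x'_def using \<open>G (MM (real n)) (Xs n s) = _\<close> by (simp only: a b')
  qed
  have deriv: "(xg has_vector_derivative x' t) (at t within {0..})" if t: "0 \<le> t" for t
  proof (rule has_vector_derivative_transform_within[where f="Xs (N t)" and d=1])
    show "(Xs (N t) has_vector_derivative x' t) (at t within {0..})"
      using Xd[OF t, of "N t"] x'G[OF t less_imp_le[OF Ngt[OF t]]] by simp
    fix s assume s: "s \<in> {0..}" "dist s t < 1"
    have "s \<le> real (N t)" using s Ngt[OF t] unfolding N_def dist_real_def by (auto simp: abs_less_iff) linarith
    thus "Xs (N t) s = xg s" using agree s by auto
  qed (use t in auto)
  have Gc: "continuous_on S (G M)" if "0 < M" for S M
    by (rule lipschitz_on_continuous_on[where L="LG M"], rule lipschitz_onI)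
       (use G_lip[OF that] LG_pos[OF that] in \<open>auto simp: dist_norm\<close>)
  have Xc: "continuous (at t within {0..}) (Xs n)" if "0 \<le> t" for n t
    by (rule has_vector_derivative_continuous[OF Xd[OF that]])
  have x'c: "continuous_on {0..} x'"
    unfolding continuous_on_eq_continuous_within
  proof
    fix t :: real assume t: "t \<in> {0..}"
    have "continuous (at t within {0..}) (\<lambda>s. G (MM (real (N t))) (Xs (N t) s))"
      by (rule continuous_within_compose3[OF _ Xc]) (use Gc[OF MM_pos] t in \<open>auto simp: continuous_on_eq_continuous_within\<close>)
    thus "continuous (at t within {0..}) x'"
    proof (rule continuous_transform_within[where \<delta>=1])
      fix s assume s: "s \<in> {0..}" "dist s t < 1"
      have "s \<le> real (N t)" using s t Ngt[of t] unfolding N_def dist_real_def by (auto simp: abs_less_iff) linarith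
      thus "G (MM (real (N t))) (Xs (N t) s) = x' s" using x'G s by auto
    qed (use t in auto)
  qed
  have lgpos: "0 < lg t" for t by (simp add: lg_def Lc_pos MM_pos)
  have lgphi: "lg t * norm (resolvent A (lg t) (xg t) - xg t) ^ (p - 1) = \<theta>" if t: "0 \<le> t" for t
  proof -
    have "t \<in> {0..real (N t)}" using Ngt[OF t] t by simp
    hence "phi (Lc (MM (real (N t))) (Xs (N t) t)) (Xs (N t) t) = \<theta>" using Xs[of "N t"] by (simp add: sol_def)
    hence "phi (lg t) (xg t) = \<theta>" by (simp add: lg_def xg_def)
    thus ?thesis by (simp add: phi_def u_def norm_minus_commute)
  qed
  have llip: "locally_lipschitz_on {0..} lg"
    unfolding locally_lipschitz_on_def
  proof
    fix t :: real assume t: "t \<in> {0..}"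
    define n where "n = N t"
    define M where "M = MM (real n)"
    have M0: "0 < M" by (simp add: M_def MM_pos)
    have tn: "t + 1/2 \<le> real n"
      using t unfolding n_def N_def by (simp, linarith)
    have "(KL M * R)-lipschitz_on (cball t (1/2) \<inter> {0..}) lg"
    proof (rule lipschitz_onI)
      fix a b assume a: "a \<in> cball t (1/2) \<inter> {0..}" and b: "b \<in> cball t (1/2) \<inter> {0..}"
      have ha: "\<bar>t - a\<bar> \<le> 1/2" using a by (simp add: dist_real_def)
      have "- (t - a) \<le> \<bar>t - a\<bar>" by (rule abs_ge_minus_self)
      hence a1: "a \<le> real n" using ha tn by linarith
      have a': "0 \<le> a" "a \<le> real n" using a a1 by auto
      have hb: "\<bar>t - b\<bar> \<le> 1/2" using b by (simp add: dist_real_def)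
      have "- (t - b) \<le> \<bar>t - b\<bar>" by (rule abs_ge_minus_self)
      hence b1: "b \<le> real n" using hb tn by linarith
      have b': "0 \<le> b" "b \<le> real n" using b b1 by auto
      have "dist (lg a) (lg b) = \<bar>Lc M (Xs n a) - Lc M (Xs n b)\<bar>"
        using conjunct2[OF agree[OF a'], symmetric] conjunct2[OF agree[OF b'], symmetric]
        by (simp only: M_def dist_real_def)
      also have "\<dots> \<le> KL M * norm (Xs n a - Xs n b)"
        unfolding KL_def by (rule Lc_lip[OF M0 R_pos Xb[OF a'(1)] Xb[OF b'(1)]])
      also have "\<dots> \<le> KL M * (R * norm (a - b))"
      proof (intro mult_left_mono)
        show "norm (Xs n a - Xs n b) \<le> R * norm (a - b)"
        proof (rule lip_from_deriv[OF _ _ a'(1) b'(1)])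
          fix s :: real assume s: "0 \<le> s"
          show "(Xs n has_vector_derivative G (MM (real n)) (Xs n s)) (at s within {0..})" by (rule Xd[OF s])
          have "norm (G (MM (real n)) (Xs n s)) = u (Lc (MM (real n)) (Xs n s)) (Xs n s)"
            using Pj_id[OF Xb[OF s]] by (simp add: G_def u_def norm_minus_commute)
          also have "\<dots> \<le> norm (Xs n s - zs)" by (rule u_le[OF Lc_pos[OF MM_pos]])
          also have "\<dots> \<le> R" by (rule Xb[OF s])
          finally show "norm (G (MM (real n)) (Xs n s)) \<le> R" .
        qed
        show "0 \<le> KL M" using M0 th R_pos by (simp add: KL_def)
      qed
      finally show "dist (lg a) (lg b) \<le> KL M * R * dist a b" by (simp add: dist_real_def mult.assoc)
    next
      show "0 \<le> KL M * R" using M0 th R_pos by (simp add: KL_def)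
    qed
    thus "\<exists>e>0. \<exists>L. L-lipschitz_on (cball t e \<inter> {0..}) lg" by (intro exI[of _ "1/2"]) auto
  qed
  have xg0: "xg 0 = x0" using Xs[of "N 0"] by (simp add: xg_def sol_def)
  have "is_cl_solution A \<theta> p x0 xg lg"
    unfolding is_cl_solution_def
  proof (intro conjI exI[of _ x'] allI impI)
    show "continuous_on {0..} x'" by (rule x'c)
  qed (use deriv lgpos lgphi llip xg0 in \<open>auto simp: x'_def\<close>)
  thus ?thesis by blast
qed

end

theorem theorem2p2:
  fixes A :: "'a::{real_inner, complete_space} \<Rightarrow> 'a set"
    and \<theta> :: real and p :: nat and x0 :: 'a
  assumes "maximal_monotone A"
    and "\<exists>z. 0 \<in> A z"
    and "\<theta> > 0"
    and "p \<ge> 1"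
    and "0 \<notin> A x0"
  shows "(\<exists>x lam. is_cl_solution A \<theta> p x0 x lam)
    \<and> (\<forall>x lam y mu. is_cl_solution A \<theta> p x0 x lam \<longrightarrow> is_cl_solution A \<theta> p x0 y mu \<longrightarrow>
          (\<forall>t\<ge>0. x t = y t \<and> lam t = mu t))
    \<and> (p \<ge> 2 \<longrightarrow> (\<forall>x lam. is_cl_solution A \<theta> p x0 x lam \<longrightarrow>
          (\<forall>t\<ge>0. norm (x t - resolvent A (lam t) (x t))
                   \<ge> norm (x 0 - resolvent A (lam 0) (x 0)) * exp (- t))))"
proof -
  obtain z where z: "0 \<in> A z" using assms(2) by blast
  interpret S: clsys0 A \<theta> p z x0
    by unfold_locales (use assms z in auto)
  have part1: "\<exists>x lam. is_cl_solution A \<theta> p x0 x lam" by (rule S.global_ex)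
  have part2: "\<forall>x lam y mu. is_cl_solution A \<theta> p x0 x lam \<longrightarrow> is_cl_solution A \<theta> p x0 y mu \<longrightarrow>
          (\<forall>t\<ge>0. x t = y t \<and> lam t = mu t)"
  proof (intro allI impI)
    fix x lam y mu and t :: real
    assume h1: "is_cl_solution A \<theta> p x0 x lam" and h2: "is_cl_solution A \<theta> p x0 y mu" and t: "0 \<le> t"
    show "x t = y t \<and> lam t = mu t"
      by (rule S.sol_unique[OF S.cl_sol[OF h1] S.cl_sol[OF h2]]) (use t in auto)
  qed
  have part3: "\<forall>x lam. is_cl_solution A \<theta> p x0 x lam \<longrightarrow>
          (\<forall>t\<ge>0. norm (x t - resolvent A (lam t) (x t))
                   \<ge> norm (x 0 - resolvent A (lam 0) (x 0)) * exp (- t))"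
  proof (intro allI impI)
    fix x lam and t :: real
    assume h: "is_cl_solution A \<theta> p x0 x lam" and t: "0 \<le> t"
    have Ssol: "S.sol t x lam" by (rule S.cl_sol[OF h])
    have tt: "t \<in> {0..t}" and t0: "0 \<in> {0..t}" using t by auto
    have lb: "S.u0 * exp (- t) \<le> S.u (lam t) (x t)" by (rule S.sol_props(3)[OF Ssol tt])
    have x00: "x 0 = x0" and p0: "0 < lam 0" and ph0: "S.phi (lam 0) (x 0) = \<theta>"
      using Ssol t0 unfolding S.sol_def by auto
    have "lam 0 = S.lam0" using S.lam0_uniq[OF p0] ph0 x00 by simp
    hence "S.u0 = S.u (lam 0) (x 0)" using x00 by (simp add: S.u0_def)
    thus "norm (x t - resolvent A (lam t) (x t)) \<ge> norm (x 0 - resolvent A (lam 0) (x 0)) * exp (- t)"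
      using lb by (simp add: S.u_def)
  qed
  show ?thesis using part1 part2 part3 by blast
qed

end
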